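(* Let $H$ be a non-degenerate Hermitian form on $\mathbb{C}^n\times\mathbb{C}^n$ with values in $\mathbb{R}^k$. Then $\dim_{\mathbb{R}}\mathfrak g_H^2=\dim_{\mathbb{R}}\tilde{\mathfrak g}_H^2$.
   Context: $H=(H^1,\dots,H^k)$ is complex-linear in the first argument and antilinear in the second; non-degenerate means (i) $H^1,\dots,H^k$ are $\mathbb{R}$-linearly independent and (ii) $H(z,z')=0$ for all $z'$ implies $z=0$. Coordinates $z\in\mathbb{C}^n$, $w\in\mathbb{C}^k$; $v\frac{\partial}{\partial z}=\sum_j v_j\frac{\partial}{\partial z_j}$. The following real spaces of holomorphic vector fields on $\mathbb{C}^{n+k}$, with the bracket of vector fields, are graded pieces of the Lie algebra $\mathfrak g_H$ of infinitesimal automorphisms of $Q_H=\{\operatorname{Im}w=H(z,z)\}$: $\mathfrak g_H^{-2}=\{q\frac{\partial}{\partial w}:q\in\mathbb{R}^k\}$; $\mathfrak g_H^{-1}=\{p\frac{\partial}{\partial z}+2iH(z,p)\frac{\partial}{\partial w}:p\in\mathbb{C}^n\}$; $\mathfrak g_H^0=\{Cz\frac{\partial}{\partial z}+sw\frac{\partial}{\partial w}\}$ with $C\in M(n,\mathbb{C})$, $s\in M(k,\mathbb{R})$, $2\operatorname{Re}H(Cz,z)=sH(z,z)$ for all $z$; $\mathfrak g_H^2=\{B(z,w)\frac{\partial}{\partial z}+r(w,w)\frac{\partial}{\partial w}\}$ with $B$ a $\mathbb{C}^n$-valued complex bilinear form on $\mathbb{C}^n\times\mathbb{C}^k$, $r$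 a $\mathbb{C}^k$-valued symmetric complex bilinear form on $\mathbb{C}^k\times\mathbb{C}^k$, satisfying $\operatorname{Re}H(B(z,u),z)=r(H(z,z),u)$ and $\operatorname{Im}H(B(z,H(z,z)),z)=0$ for all $z\in\mathbb{C}^n$, $u\in\mathbb{R}^k$. Tanaka prolongation: $\tilde{\mathfrak g}_H^0=\mathfrak g_H^0$, $\tilde{\mathfrak g}_H^{-1}=\mathfrak g_H^{-1}$, $\tilde{\mathfrak g}_H^{-2}=\mathfrak g_H^{-2}$. For $L=1,2$, $\tilde{\mathfrak g}_H^L$ is the real vector space of linear maps $X_L:\mathfrak g_H^{-1}\to\tilde{\mathfrak g}_H^{L-1}$ for which there exists a linear map $X_L':\mathfrak g_H^{-2}\to\tilde{\mathfrak g}_H^{L-2}$ with $[X_L(X_{-1}),Y_{-1}]-[X_L(Y_{-1}),X_{-1}]=X_L'([X_{-1},Y_{-1}])$ and $[X_L'(X_{-2}),X_{-1}]=[X_L(X_{-1}),X_{-2}]$ for all $X_{-1},Y_{-1}\in\mathfrak g_H^{-1}$, $X_{-2}\in\mathfrak g_H^{-2}$. Here brackets among $\mathfrak g_H^{-2},\mathfrak g_H^{-1},\mathfrak g_H^0$ are those of vector fields, and for $X_1\in\tilde{\mathfrak g}_H^1$ one sets $[X_1,X_{-1}]=X_1(X_{-1})=-[X_{-1},X_1]$, $[X_1,X_{-2}]=X_1'(X_{-2})=-[X_{-2},X_1]$. *)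

theory Defs
  imports "HOL-Analysis.Analysis" "HOL-Library.Function_Algebras"
begin

text \<open>Points of C^(n+k) are pairs (z,w) with z in C^n, w in C^k; holomorphic vector
  fields are represented by their coefficient maps C^(n+k) -> C^(n+k).\<close>

type_synonym ('n,'k) pt = "(complex^'n) \<times> (complex^'k)"
type_synonym ('n,'k) vf = "('n,'k) pt \<Rightarrow> ('n,'k) pt"

definition vf_bracket :: "('n::finite,'k::finite) vf \<Rightarrow> ('n,'k) vf \<Rightarrow> ('n,'k) vf" where
  "vf_bracket X Y = (\<lambda>p. frechet_derivative Y (at p) (X p) - frechet_derivative X (at p) (Y p))"

definition clin :: "(complex^'a \<Rightarrow> complex^'b) \<Rightarrow> bool" where
  "clin f \<longleftrightarrow> (\<forall>x y. f (x + y) = f x + f y) \<and> (\<forall>c x. f (c *s x) = c *s f x)"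

definition cbilin :: "(complex^'a \<Rightarrow> complex^'b \<Rightarrow> complex^'c) \<Rightarrow> bool" where
  "cbilin B \<longleftrightarrow> (\<forall>w. clin (\<lambda>z. B z w)) \<and> (\<forall>z. clin (B z))"

definition hermitian_form :: "(complex^'n \<Rightarrow> complex^'n \<Rightarrow> complex^'k) \<Rightarrow> bool" where
  "hermitian_form H \<longleftrightarrow>
     (\<forall>z'. clin (\<lambda>z. H z z')) \<and>
     (\<forall>z z1 z2. H z (z1 + z2) = H z z1 + H z z2) \<and>
     (\<forall>z c z'. H z (c *s z') = cnj c *s H z z') \<and>
     (\<forall>z z'. H z' z = (\<chi> j. cnj (H z z' $ j)))"

definition nondegenerate :: "(complex^'n \<Rightarrow> complex^'n \<Rightarrow> complex^'k) \<Rightarrow> bool" where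
  "nondegenerate H \<longleftrightarrow>
     (\<forall>a::real^'k. (\<forall>z z'. (\<Sum>j\<in>UNIV. complex_of_real (a $ j) * (H z z' $ j)) = 0) \<longrightarrow> a = 0) \<and>
     (\<forall>z. (\<forall>z'. H z z' = 0) \<longrightarrow> z = 0)"

definition rvec :: "real^'k \<Rightarrow> complex^'k" where
  "rvec q = (\<chi> j. complex_of_real (q $ j))"

definition rmat :: "real^'k^'k \<Rightarrow> complex^'k \<Rightarrow> complex^'k" where
  "rmat s w = (\<chi> j. \<Sum>l\<in>UNIV. complex_of_real (s $ j $ l) * w $ l)"

definition g_m2 :: "(complex^'n \<Rightarrow> complex^'n \<Rightarrow> complex^'k) \<Rightarrow> ('n::finite,'k::finite) vf set" where
  "g_m2 H = {(\<lambda>(z,w). (0, rvec q)) | q. True}"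

definition g_m1 :: "(complex^'n \<Rightarrow> complex^'n \<Rightarrow> complex^'k) \<Rightarrow> ('n::finite,'k::finite) vf set" where
  "g_m1 H = {(\<lambda>(z,w). (p, (2 * \<i>) *s H z p)) | p. True}"

definition g_0 :: "(complex^'n \<Rightarrow> complex^'n \<Rightarrow> complex^'k) \<Rightarrow> ('n::finite,'k::finite) vf set" where
  "g_0 H = {(\<lambda>(z,w). (C *v z, rmat s w)) | (C :: complex^'n^'n) (s :: real^'k^'k).
              \<forall>z. (2::real) *\<^sub>R (\<chi> j. Re (H (C *v z) z $ j)) = s *v (\<chi> j. Re (H z z $ j))}"

definition g_2 :: "(complex^'n \<Rightarrow> complex^'n \<Rightarrow> complex^'k) \<Rightarrow> ('n::finite,'k::finite) vf set" where
  "g_2 H = {(\<lambda>(z,w). (B z w, r w w)) | (B :: complex^'n \<Rightarrow> complex^'k \<Rightarrow> complex^'n)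
              (r :: complex^'k \<Rightarrow> complex^'k \<Rightarrow> complex^'k).
              cbilin B \<and> cbilin r \<and> (\<forall>u v. r u v = r v u) \<and>
              (\<forall>z (u::real^'k). (\<chi> j. complex_of_real (Re (H (B z (rvec u)) z $ j))) = r (H z z) (rvec u)) \<and>
              (\<forall>z j. Im (H (B z (H z z)) z $ j) = 0)}"

definition vscale :: "real \<Rightarrow> ('n::finite,'k::finite) vf \<Rightarrow> ('n,'k) vf" where
  "vscale c X = (\<lambda>p. c *\<^sub>R X p)"

definition vscale2 :: "real \<Rightarrow> (('n::finite,'k::finite) vf \<Rightarrow> ('n,'k) vf) \<Rightarrow> (('n,'k) vf \<Rightarrow> ('n,'k) vf)" where
  "vscale2 c F = (\<lambda>A. vscale c (F A))"

definition vscale3 :: "real \<Rightarrow> (('n::finite,'k::finite) vf \<Rightarrow> (('n,'k) vf \<Rightarrow> ('n,'k) vf)) \<Rightarrow> (('n,'k) vf \<Rightarrow> (('n,'k) vf \<Rightarrow> ('n,'k) vf))" where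
  "vscale3 c X = (\<lambda>A. vscale2 c (X A))"

definition lin_on :: "'a set \<Rightarrow> (real \<Rightarrow> 'a \<Rightarrow> 'a) \<Rightarrow> (real \<Rightarrow> 'b \<Rightarrow> 'b) \<Rightarrow> ('a::plus \<Rightarrow> 'b::plus) \<Rightarrow> bool" where
  "lin_on S scA scB f \<longleftrightarrow> (\<forall>x\<in>S. \<forall>y\<in>S. f (x + y) = f x + f y) \<and> (\<forall>c. \<forall>x\<in>S. f (scA c x) = scB c (f x))"

definition tanaka1_cond :: "(complex^'n \<Rightarrow> complex^'n \<Rightarrow> complex^'k) \<Rightarrow> (('n::finite,'k::finite) vf \<Rightarrow> ('n,'k) vf) \<Rightarrow> (('n,'k) vf \<Rightarrow> ('n,'k) vf) \<Rightarrow> bool" where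
  "tanaka1_cond H X1 X1' \<longleftrightarrow>
     (\<forall>Q\<in>g_m2 H. X1' Q \<in> g_m1 H) \<and> lin_on (g_m2 H) vscale vscale X1' \<and>
     (\<forall>A\<in>g_m1 H. \<forall>B\<in>g_m1 H. vf_bracket (X1 A) B - vf_bracket (X1 B) A = X1' (vf_bracket A B)) \<and>
     (\<forall>Q\<in>g_m2 H. \<forall>A\<in>g_m1 H. vf_bracket (X1' Q) A = vf_bracket (X1 A) Q)"

text \<open>First prolongation: linear maps g^{-1} -> g^0 (extended by 0 outside g^{-1}).\<close>
definition tg1 :: "(complex^'n \<Rightarrow> complex^'n \<Rightarrow> complex^'k) \<Rightarrow> (('n::finite,'k::finite) vf \<Rightarrow> ('n,'k) vf) set" where
  "tg1 H = {X1. (\<forall>A. A \<notin> g_m1 H \<longrightarrow> X1 A = 0) \<and> (\<forall>A\<in>g_m1 H. X1 A \<in> g_0 H) \<and>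
              lin_on (g_m1 H) vscale vscale X1 \<and> (\<exists>X1'. tanaka1_cond H X1 X1')}"

text \<open>The map X_1' associated to X_1 (it is unique), giving [X_1, X_{-2}] = X_1'(X_{-2}).\<close>
definition prime1 :: "(complex^'n \<Rightarrow> complex^'n \<Rightarrow> complex^'k) \<Rightarrow> (('n::finite,'k::finite) vf \<Rightarrow> ('n,'k) vf) \<Rightarrow> (('n,'k) vf \<Rightarrow> ('n,'k) vf)" where
  "prime1 H X1 = (SOME X1'. tanaka1_cond H X1 X1')"

text \<open>Second prolongation: linear maps g^{-1} -> tg^1 (extended by 0 outside g^{-1}).\<close>
definition tg2 :: "(complex^'n \<Rightarrow> complex^'n \<Rightarrow> complex^'k) \<Rightarrow> (('n::finite,'k::finite) vf \<Rightarrow> (('n,'k) vf \<Rightarrow> ('n,'k) vf)) set" where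
  "tg2 H = {X2. (\<forall>A. A \<notin> g_m1 H \<longrightarrow> X2 A = 0) \<and> (\<forall>A\<in>g_m1 H. X2 A \<in> tg1 H) \<and>
              lin_on (g_m1 H) vscale vscale2 X2 \<and>
              (\<exists>X2'. (\<forall>Q\<in>g_m2 H. X2' Q \<in> g_0 H) \<and> lin_on (g_m2 H) vscale vscale X2' \<and>
                 (\<forall>A\<in>g_m1 H. \<forall>B\<in>g_m1 H. X2 A B - X2 B A = X2' (vf_bracket A B)) \<and>
                 (\<forall>Q\<in>g_m2 H. \<forall>A\<in>g_m1 H. vf_bracket (X2' Q) A = prime1 H (X2 A) Q))}"

end

theory Submission
  imports Defs
begin

lemma scaleR_cvec: "(c::real) *\<^sub>R (v::complex^'n) = complex_of_real c *s v"
  by (vector scaleR_conv_of_real)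

lemma fd_affine:
  fixes L :: "('n::finite,'k::finite) vf"
  assumes "linear L"
  shows "frechet_derivative (\<lambda>x. c + L x) (at p) = L"
proof -
  have "bounded_linear L" using assms linear_conv_bounded_linear by blast
  then have "((\<lambda>x. c + L x) has_derivative L) (at p)"
    by (auto intro!: derivative_eq_intros bounded_linear_imp_has_derivative)
  then show ?thesis by (metis frechet_derivative_at)
qed

definition Rev :: "complex^'k \<Rightarrow> real^'k" where "Rev v = (\<chi> j. Re (v$j))"
definition Imv :: "complex^'k \<Rightarrow> real^'k" where "Imv v = (\<chi> j. Im (v$j))"

lemma rvec_comp[simp]: "rvec q $ j = complex_of_real (q $ j)"
  by (simp add: rvec_def)
lemma rmat_comp: "rmat s w $ j = (\<Sum>l\<in>UNIV. complex_of_real (s $ j $ l) * w $ l)"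
  by (simp add: rmat_def)
lemma Rev_comp[simp]: "Rev v $ j = Re (v $ j)" by (simp add: Rev_def)
lemma Imv_comp[simp]: "Imv v $ j = Im (v $ j)" by (simp add: Imv_def)

lemma rmat_rvec: "rmat s (rvec q) = rvec (s *v q)"
  by (simp add: vec_eq_iff rmat_comp matrix_vector_mult_def)

lemma rvec_add[simp]: "rvec (a + b) = rvec a + rvec b" by (simp add: vec_eq_iff)
lemma rvec_scale[simp]: "rvec (c *\<^sub>R a) = complex_of_real c *s rvec a" by (simp add: vec_eq_iff)
lemma rvec_neg[simp]: "rvec (- a) = - rvec a" by (simp add: vec_eq_iff)
lemma rvec_diff[simp]: "rvec (a - b) = rvec a - rvec b" by (simp add: vec_eq_iff)
lemma rvec_zero[simp]: "rvec 0 = 0" by (simp add: vec_eq_iff)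
lemma rvec_inj: "rvec a = rvec b \<longleftrightarrow> a = b" by (simp add: vec_eq_iff)

lemma rmat_add: "rmat s (a + b) = rmat s a + rmat s b"
  by (simp add: vec_eq_iff rmat_comp distrib_left sum.distrib)
lemma rmat_scale: "rmat s (c *s a) = c *s rmat s a"
  by (simp add: vec_eq_iff rmat_comp sum_distrib_left mult_ac)
lemma rmat_addm: "rmat (s + s') a = rmat s a + rmat s' a"
  by (simp add: vec_eq_iff rmat_comp distrib_right sum.distrib)
lemma rmat_scalem: "rmat (c *\<^sub>R s) a = complex_of_real c *s rmat s a"
  by (simp add: vec_eq_iff rmat_comp sum_distrib_left mult_ac)

lemma sesq_polar:
  fixes S :: "complex^'n \<Rightarrow> complex^'n \<Rightarrow> complex"
  assumes aL: "\<And>a b c. S (a + b) c = S a c + S b c"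
    and aR: "\<And>a b c. S a (b + c) = S a b + S a c"
    and sL: "\<And>a b c. S (c *s a) b = c * S a b"
    and sR: "\<And>a b c. S a (c *s b) = cnj c * S a b"
    and z: "\<And>a. S a a = 0"
  shows "S a b = 0"
proof -
  have "S (a + b) (a + b) = S a a + S a b + S b a + S b b" by (simp add: aL aR)
  then have 1: "S a b + S b a = 0" using z[of "a + b"] z[of a] z[of b] by simp
  have "S (a + \<i> *s b) (a + \<i> *s b) = S a a - \<i> * S a b + \<i> * S b a + S b b" by (simp add: aL aR sL sR) (simp add: algebra_simps)
  then have 2: "- \<i> * S a b + \<i> * S b a = 0" using z[of "a + \<i> *s b"] z[of a] z[of b] by simp
  from 1 2 show ?thesis by (simp add: complex_eq_iff)
qed

locale herm =
  fixes H :: "complex^'n::finite \<Rightarrow> complex^'n \<Rightarrow> complex^'k::finite"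
  assumes hf: "hermitian_form H" and nd: "nondegenerate H"
begin

lemma H_addL: "H (a + b) c = H a c + H b c"
  using hf unfolding hermitian_form_def clin_def by blast
lemma H_scL: "H (c *s a) b = c *s H a b"
  using hf unfolding hermitian_form_def clin_def by blast
lemma H_addR: "H a (b + c) = H a b + H a c"
  using hf unfolding hermitian_form_def clin_def by blast
lemma H_scR: "H a (c *s b) = cnj c *s H a b"
  using hf unfolding hermitian_form_def clin_def by blast
lemma H_swap: "H b a $ j = cnj (H a b $ j)"
proof -
  have "H b a = (\<chi> j. cnj (H a b $ j))" using hf unfolding hermitian_form_def by blast
  then show ?thesis by simp
qed
lemma H_0L[simp]: "H 0 b = 0" using H_addL[of 0 0 b] by (metis add_cancel_right_right add.right_neutral)
lemma H_0R[simp]: "H a 0 = 0" using H_addR[of a 0 0] by (metis add_cancel_right_right add.right_neutral)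
lemma H_negL: "H (- a) b = - H a b" using H_addL[of a "-a" b] by (simp add: eq_neg_iff_add_eq_0 add.commute)
lemma H_negR: "H a (- b) = - H a b" using H_addR[of a b "-b"] by (simp add: eq_neg_iff_add_eq_0 add.commute)
lemma H_diffL: "H (a - b) c = H a c - H b c" using H_addL[of a "-b" c] H_negL[of b c] by simp
lemma H_diffR: "H a (b - c) = H a b - H a c" using H_addR[of a b "-c"] H_negR[of a c] by simp

lemmas Hs = H_addL H_scL H_addR H_scR H_negL H_negR H_diffL H_diffR

lemma H_scRL: "H (c *\<^sub>R a) b = c *\<^sub>R H a b" by (simp add: scaleR_cvec H_scL)
lemma H_scRR: "H a (c *\<^sub>R b) = c *\<^sub>R H a b" by (simp add: scaleR_cvec H_scR)

lemma Hzz_real: "Im (H z z $ j) = 0"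
  using H_swap[of z z j] by (simp add: complex_eq_iff)

lemma Hzz_rvec: "H z z = rvec (Rev (H z z))"
  by (simp add: vec_eq_iff complex_eq_iff Hzz_real)

definition aF :: "complex^'n \<Rightarrow> ('n,'k) vf" where
  "aF p = (\<lambda>(z,w). (p, (2 * \<i>) *s H z p))"
definition qF :: "real^'k \<Rightarrow> ('n,'k) vf" where
  "qF q = (\<lambda>(z,w). (0, rvec q))"
definition gF :: "complex^'n^'n \<Rightarrow> real^'k^'k \<Rightarrow> ('n,'k) vf" where
  "gF C s = (\<lambda>(z,w). (C *v z, rmat s w))"
definition ImHv :: "complex^'n \<Rightarrow> complex^'n \<Rightarrow> real^'k" where
  "ImHv p p' = Imv (H p p')"

lemma g_m1_eq: "g_m1 H = range aF" unfolding g_m1_def aF_def by auto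
lemma g_m2_eq: "g_m2 H = range qF" unfolding g_m2_def qF_def by auto

lemma aF_aff: "aF p = (\<lambda>x. (p,0) + (\<lambda>x. (0, (2 * \<i>) *s H (fst x) p)) x)"
  by (auto simp: aF_def)
lemma aF_lin: "linear (\<lambda>x::('n,'k) pt. (0::complex^'n, (2 * \<i>) *s H (fst x) p))"
  by (rule linearI) (simp_all add: H_addL scaleR_cvec H_scL vec_eq_iff algebra_simps)
lemma fd_aF: "frechet_derivative (aF p) (at x) = (\<lambda>x. (0, (2 * \<i>) *s H (fst x) p))"
  unfolding aF_aff by (rule fd_affine[OF aF_lin])

lemma qF_aff: "qF q = (\<lambda>x. (0, rvec q) + (\<lambda>x. 0) x)"
  by (auto simp: qF_def)
lemma fd_qF: "frechet_derivative (qF q) (at x) = (\<lambda>x. 0)"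
  unfolding qF_aff by (rule fd_affine) (rule linearI; simp)

lemma gF_aff: "gF C s = (\<lambda>x. 0 + (\<lambda>x. (C *v fst x, rmat s (snd x))) x)"
  by (auto simp: gF_def)
lemma gF_lin: "linear (\<lambda>x::('n,'k) pt. (C *v fst x, rmat s (snd x)))"
  by (rule linearI) (auto simp: matrix_vector_right_distrib rmat_add scaleR_cvec vector_scalar_commute rmat_scale)
lemma fd_gF: "frechet_derivative (gF C s) (at x) = (\<lambda>x. (C *v fst x, rmat s (snd x)))"
  unfolding gF_aff by (rule fd_affine[OF gF_lin])

lemma g0pol:
  assumes "\<forall>z. (2::real) *\<^sub>R (\<chi> j. Re (H (C *v z) z $ j)) = s *v (\<chi> j. Re (H z z $ j))"
  shows "H (C *v z) z' + H z (C *v z') = rmat s (H z z')"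
proof -
  have "(H (C *v z) z' + H z (C *v z') - rmat s (H z z')) $ j = 0" for j
  proof (rule sesq_polar[where S="\<lambda>z z'. (H (C *v z) z' + H z (C *v z') - rmat s (H z z')) $ j"])
    fix a
    have e: "2 * Re (H (C *v a) a $ j) = (s *v Rev (H a a)) $ j"
      using assms[rule_format, of a] by (simp add: vec_eq_iff Rev_def)
    have "rmat s (H a a) $ j = complex_of_real ((s *v Rev (H a a)) $ j)"
      by (subst Hzz_rvec) (simp add: rmat_rvec)
    then show "(H (C *v a) a + H a (C *v a) - rmat s (H a a)) $ j = 0"
      using e H_swap[of "C *v a" a j] by (simp add: complex_eq_iff)
  qed (simp_all add: Hs matrix_vector_right_distrib vector_scalar_commute rmat_add rmat_scale algebra_simps)
  then show ?thesis by (simp add: vec_eq_iff)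
qed

lemma brk_ga:
  assumes "\<And>z z'. H (C *v z) z' + H z (C *v z') = rmat s (H z z')"
  shows "vf_bracket (gF C s) (aF p) = aF (- (C *v p))"
proof -
  have "(2 * \<i>) *s H (C *v z) p - rmat s ((2 * \<i>) *s H z p) = (2 * \<i>) *s H z (- (C *v p))" for z
  proof -
    have e: "H (C *v z) p - rmat s (H z p) = - H z (C *v p)" by (simp add: assms[of z p, symmetric])
    show ?thesis by (simp add: rmat_scale H_negR e[symmetric] vector_ssub_ldistrib)
  qed
  then show ?thesis
    unfolding vf_bracket_def fd_aF fd_gF
    by (auto simp: aF_def gF_def fun_eq_iff)
qed

lemma brk_gq: "vf_bracket (gF C s) (qF q) = qF (- (s *v q))"
  unfolding vf_bracket_def fd_qF fd_gF
  by (auto simp: qF_def gF_def fun_eq_iff rmat_rvec)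

lemma brk_aa: "vf_bracket (aF p) (aF p') = qF (-4 *\<^sub>R ImHv p p')"
proof -
  have "(2 * \<i>) * (H p p' $ j - H p' p $ j) = - 4 * complex_of_real (Im (H p p' $ j))" for j
    using H_swap[of p' p j] by (simp add: complex_eq_iff)
  then show ?thesis
    unfolding vf_bracket_def fd_aF
    by (auto simp: aF_def qF_def ImHv_def vec_eq_iff algebra_simps fun_eq_iff)
qed


lemma aF_00: "aF p (0,0) = (p, 0)" by (simp add: aF_def)
lemma aF_inj: "aF p = aF p' \<longleftrightarrow> p = p'" by (metis aF_00 fst_conv)
lemma qF_inj: "qF q = qF q' \<longleftrightarrow> q = q'" by (metis qF_def case_prod_conv snd_conv rvec_inj)

lemma matvec_axis: "(C *v axis l 1) $ i = C $ i $ l"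
  by (simp add: matrix_vector_mult_def axis_def if_distrib cong: if_cong)
lemma rmat_axis: "rmat s (rvec (axis l 1)) $ j = complex_of_real (s $ j $ l)"
  by (simp add: rmat_rvec matvec_axis)

lemma gF_inj: "gF C s = gF C' s' \<longleftrightarrow> C = C' \<and> s = s'"
proof
  assume e: "gF C s = gF C' s'"
  have "C *v z = C' *v z" for z using fun_cong[OF e, of "(z,0)"] by (simp add: gF_def)
  then have "C = C'" by (metis matvec_axis vec_eq_iff)
  moreover have "rmat s w = rmat s' w" for w using fun_cong[OF e, of "(0,w)"] by (simp add: gF_def)
  then have "s = s'" by (metis rmat_axis vec_eq_iff of_real_eq_iff)
  ultimately show "C = C' \<and> s = s'" by simp
qed simp

lemma aF_add: "aF p + aF p' = aF (p + p')"
  by (auto simp: aF_def fun_eq_iff H_addR vector_add_ldistrib)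
lemma aF_scale: "vscale c (aF p) = aF (c *\<^sub>R p)"
  by (auto simp: aF_def fun_eq_iff vscale_def H_scR scaleR_cvec vec_eq_iff)
lemma aF_0: "aF 0 = 0" by (auto simp: aF_def fun_eq_iff zero_prod_def)
lemma qF_add: "qF q + qF q' = qF (q + q')"
  by (auto simp: qF_def fun_eq_iff)
lemma qF_scale: "vscale c (qF q) = qF (c *\<^sub>R q)"
  by (auto simp: qF_def fun_eq_iff vscale_def scaleR_cvec vec_eq_iff)
lemma gF_add: "gF C s + gF C' s' = gF (C + C') (s + s')"
  by (auto simp: gF_def fun_eq_iff matrix_vector_mult_add_rdistrib rmat_addm)
lemma gF_scale: "vscale c (gF C s) = gF (c *\<^sub>R C) (c *\<^sub>R s)"
  by (auto simp: gF_def fun_eq_iff vscale_def rmat_scalem scaleR_cvec vec_eq_iff matrix_vector_mult_def sum_distrib_left mult_ac)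
lemma gF_0: "gF 0 0 = 0"
  by (auto simp: gF_def fun_eq_iff rmat_def matrix_vector_mult_def zero_prod_def zero_vec_def)

lemma span_ImH: "span (range (\<lambda>(p,p'). ImHv p p')) = UNIV"
proof (rule ccontr)
  let ?S = "range (\<lambda>(p,p'). ImHv p p')"
  assume "span ?S \<noteq> UNIV"
  then have "span ?S \<subset> span UNIV" by auto
  then obtain x :: "real^'k" where x: "x \<noteq> 0" "\<And>y. y \<in> span ?S \<Longrightarrow> orthogonal x y"
    using orthogonal_to_subspace_exists_gen by blast
  have o: "(\<Sum>j\<in>UNIV. x $ j * Im (H p p' $ j)) = 0" for p p'
  proof -
    have "ImHv p p' \<in> span ?S" by (rule span_base) auto
    from x(2)[OF this] show ?thesis by (simp add: orthogonal_def inner_vec_def ImHv_def)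
  qed
  have "(\<Sum>j\<in>UNIV. complex_of_real (x $ j) * (H p p' $ j)) = 0" for p p'
  proof -
    have re: "(\<Sum>j\<in>UNIV. x $ j * Re (H p p' $ j)) = 0"
      using o[of "\<i> *s p" p'] by (simp add: H_scL)
    show ?thesis using o[of p p'] re by (simp add: complex_eq_iff Re_sum Im_sum)
  qed
  then have "x = 0" using nd unfolding nondegenerate_def by blast
  with x show False by simp
qed

lemma lin_vanish:
  fixes L :: "real^'k \<Rightarrow> 'v::real_vector"
  assumes "\<And>a b. L (a + b) = L a + L b" "\<And>c a. L (c *\<^sub>R a) = c *\<^sub>R L a"
    and "\<And>p p'. L (ImHv p p') = 0"
  shows "L q = 0"
proof -
  have lin: "linear L" by (rule linearI) (use assms in auto)
  have "q \<in> span (range (\<lambda>(p,p'). ImHv p p'))" by (simp add: span_ImH)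
  then show ?thesis
    by (rule linear_eq_0_on_span[OF lin, rotated]) (use assms(3) in auto)
qed

end

lemma mv_neg: "(- M) *v (x::'a::ring_1^'n) = - (M *v x)"
  by (simp add: vec_eq_iff matrix_vector_mult_def sum_negf)
lemma mv_scaleR: "(c *\<^sub>R M) *v (x::complex^'n) = c *\<^sub>R (M *v x)"
  by (simp add: vec_eq_iff matrix_vector_mult_def scaleR_sum_right)
lemma mv_diff: "(M - N) *v (x::'a::ring_1^'n) = M *v x - N *v x"
  by (simp add: matrix_vector_mult_diff_rdistrib)
lemma mv_add: "(M + N) *v (x::'a::ring_1^'n) = M *v x + N *v x"
  by (simp add: matrix_vector_mult_add_rdistrib)

context herm begin

definition g0c :: "complex^'n^'n \<Rightarrow> real^'k^'k \<Rightarrow> bool" where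
  "g0c C s \<longleftrightarrow> (\<forall>z. (2::real) *\<^sub>R (\<chi> j. Re (H (C *v z) z $ j)) = s *v (\<chi> j. Re (H z z $ j)))"

lemma g_0_eq: "g_0 H = {gF C s | C s. g0c C s}"
  unfolding g_0_def gF_def g0c_def by blast

lemma g0c_pol: "g0c C s \<Longrightarrow> H (C *v z) z' + H z (C *v z') = rmat s (H z z')"
  by (rule g0pol) (simp add: g0c_def)

lemma brk_ga': "g0c C s \<Longrightarrow> vf_bracket (gF C s) (aF p) = aF (- (C *v p))"
  by (rule brk_ga) (rule g0c_pol)

lemma aF_diff: "aF p - aF p' = aF (p - p')"
  by (auto simp: aF_def fun_eq_iff H_diffR vector_ssub_ldistrib)
lemma gF_diff: "gF C s - gF C' s' = gF (C - C') (s - s')"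
  by (auto simp: gF_def fun_eq_iff matrix_vector_mult_diff_rdistrib rmat_def vec_eq_iff left_diff_distrib sum_subtractf)

definition tdata where
  "tdata X2 Cm sm Dm tm \<longleftrightarrow>
   (\<forall>A. A \<notin> g_m1 H \<longrightarrow> X2 A = 0) \<and> (\<forall>A A'. A' \<notin> g_m1 H \<longrightarrow> X2 A A' = 0) \<and>
   (\<forall>p p'. X2 (aF p) (aF p') = gF (Cm p p') (sm p p') \<and> g0c (Cm p p') (sm p p')) \<and>
   (\<forall>q. g0c (Dm q) (tm q)) \<and>
   (\<forall>a b. Dm (a+b) = Dm a + Dm b \<and> tm (a+b) = tm a + tm b) \<and>
   (\<forall>c a. Dm (c *\<^sub>R a) = c *\<^sub>R Dm a \<and> tm (c *\<^sub>R a) = c *\<^sub>R tm a) \<and>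
   (\<forall>p p'. Cm p p' - Cm p' p = -4 *\<^sub>R Dm (ImHv p p')) \<and>
   (\<forall>p p'. sm p p' - sm p' p = -4 *\<^sub>R tm (ImHv p p')) \<and>
   (\<forall>p p' p''. Cm p p'' *v p' - Cm p p' *v p'' = 4 *\<^sub>R (Dm (ImHv p' p'') *v p)) \<and>
   (\<forall>p p' q. sm p p' *v q = -4 *\<^sub>R ImHv (Dm q *v p) p')"

lemma tg2_tdata:
  assumes X2: "X2 \<in> tg2 H"
  shows "\<exists>Cm sm Dm tm. tdata X2 Cm sm Dm tm"
proof -
  from X2 obtain X2' where
    z1: "\<forall>A. A \<notin> g_m1 H \<longrightarrow> X2 A = 0" and
    t1: "\<forall>A\<in>g_m1 H. X2 A \<in> tg1 H" and
    q0: "\<forall>Q\<in>g_m2 H. X2' Q \<in> g_0 H" and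
    ql: "lin_on (g_m2 H) vscale vscale X2'" and
    d: "\<forall>A\<in>g_m1 H. \<forall>B\<in>g_m1 H. X2 A B - X2 B A = X2' (vf_bracket A B)" and
    e: "\<forall>Q\<in>g_m2 H. \<forall>A\<in>g_m1 H. vf_bracket (X2' Q) A = prime1 H (X2 A) Q"
    unfolding tg2_def by blast
  have z2: "\<forall>A A'. A' \<notin> g_m1 H \<longrightarrow> X2 A A' = 0"
  proof (intro allI impI)
    fix A A' assume "A' \<notin> g_m1 H"
    show "X2 A A' = 0"
    proof (cases "A \<in> g_m1 H")
      case True then have "X2 A \<in> tg1 H" using t1 by blast
      then show ?thesis using \<open>A' \<notin> g_m1 H\<close> unfolding tg1_def by blast
    next
      case False then show ?thesis using z1 by simp
    qed
  qed
  have "\<forall>pp. \<exists>Cs. X2 (aF (fst pp)) (aF (snd pp)) = gF (fst Cs) (snd Cs) \<and> g0c (fst Cs) (snd Cs)"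
  proof
    fix pp :: "(complex^'n) \<times> (complex^'n)"
    have "X2 (aF (fst pp)) \<in> tg1 H" using t1 by (simp add: g_m1_eq)
    then have "X2 (aF (fst pp)) (aF (snd pp)) \<in> g_0 H" unfolding tg1_def by (auto simp: g_m1_eq)
    then show "\<exists>Cs. X2 (aF (fst pp)) (aF (snd pp)) = gF (fst Cs) (snd Cs) \<and> g0c (fst Cs) (snd Cs)"
      unfolding g_0_eq by auto
  qed
  then obtain F where F: "\<And>pp. X2 (aF (fst pp)) (aF (snd pp)) = gF (fst (F pp)) (snd (F pp)) \<and> g0c (fst (F pp)) (snd (F pp))"
    by metis
  define Cm where "Cm p p' = fst (F (p,p'))" for p p'
  define sm where "sm p p' = snd (F (p,p'))" for p p'
  have CS: "X2 (aF p) (aF p') = gF (Cm p p') (sm p p')" "g0c (Cm p p') (sm p p')" for p p'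
    using F[of "(p,p')"] by (simp_all add: Cm_def sm_def)
  have "\<forall>q. \<exists>Ds. X2' (qF q) = gF (fst Ds) (snd Ds) \<and> g0c (fst Ds) (snd Ds)"
  proof
    fix q
    have "X2' (qF q) \<in> g_0 H" using q0 by (simp add: g_m2_eq)
    then show "\<exists>Ds. X2' (qF q) = gF (fst Ds) (snd Ds) \<and> g0c (fst Ds) (snd Ds)"
      unfolding g_0_eq by auto
  qed
  then obtain G where G: "\<And>q. X2' (qF q) = gF (fst (G q)) (snd (G q)) \<and> g0c (fst (G q)) (snd (G q))"
    by metis
  define Dm where "Dm q = fst (G q)" for q
  define tm where "tm q = snd (G q)" for q
  have DT: "X2' (qF q) = gF (Dm q) (tm q)" "g0c (Dm q) (tm q)" for q
    using G[of q] by (simp_all add: Dm_def tm_def)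
  have ladd: "Dm (a+b) = Dm a + Dm b \<and> tm (a+b) = tm a + tm b" for a b
  proof -
    have "X2' (qF a + qF b) = X2' (qF a) + X2' (qF b)"
      using ql unfolding lin_on_def by (auto simp: g_m2_eq)
    then have "gF (Dm (a+b)) (tm (a+b)) = gF (Dm a + Dm b) (tm a + tm b)"
      by (simp add: qF_add DT gF_add)
    then show ?thesis by (simp add: gF_inj)
  qed
  have lsc: "Dm (c *\<^sub>R a) = c *\<^sub>R Dm a \<and> tm (c *\<^sub>R a) = c *\<^sub>R tm a" for c a
  proof -
    have "X2' (vscale c (qF a)) = vscale c (X2' (qF a))"
      using ql unfolding lin_on_def by (auto simp: g_m2_eq)
    then have "gF (Dm (c *\<^sub>R a)) (tm (c *\<^sub>R a)) = gF (c *\<^sub>R Dm a) (c *\<^sub>R tm a)"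
      by (simp add: qF_scale DT gF_scale)
    then show ?thesis by (simp add: gF_inj)
  qed
  have dd: "Cm p p' - Cm p' p = -4 *\<^sub>R Dm (ImHv p p') \<and> sm p p' - sm p' p = -4 *\<^sub>R tm (ImHv p p')" for p p'
  proof -
    have "X2 (aF p) (aF p') - X2 (aF p') (aF p) = X2' (vf_bracket (aF p) (aF p'))"
      using d by (auto simp: g_m1_eq)
    then have "gF (Cm p p' - Cm p' p) (sm p p' - sm p' p) = gF (Dm (-4 *\<^sub>R ImHv p p')) (tm (-4 *\<^sub>R ImHv p p'))"
      by (simp add: CS gF_diff brk_aa DT)
    then show ?thesis using lsc[of "-4" "ImHv p p'"] by (simp add: gF_inj)
  qed
  have pr: "prime1 H (X2 (aF p)) (qF q) = aF (- (Dm q *v p))" for p q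
  proof -
    have "vf_bracket (X2' (qF q)) (aF p) = prime1 H (X2 (aF p)) (qF q)"
      using e by (auto simp: g_m1_eq g_m2_eq)
    then show ?thesis by (simp add: DT brk_ga')
  qed
  have tc: "tanaka1_cond H (X2 (aF p)) (prime1 H (X2 (aF p)))" for p
  proof -
    have "X2 (aF p) \<in> tg1 H" using t1 by (simp add: g_m1_eq)
    then have "\<exists>X1'. tanaka1_cond H (X2 (aF p)) X1'" unfolding tg1_def by blast
    then show ?thesis unfolding prime1_def by (rule someI_ex)
  qed
  have ss: "Cm p p'' *v p' - Cm p p' *v p'' = 4 *\<^sub>R (Dm (ImHv p' p'') *v p)" for p p' p''
  proof -
    have "vf_bracket (X2 (aF p) (aF p')) (aF p'') - vf_bracket (X2 (aF p) (aF p'')) (aF p')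
          = prime1 H (X2 (aF p)) (vf_bracket (aF p') (aF p''))"
      using tc[of p] unfolding tanaka1_cond_def by (auto simp: g_m1_eq)
    then have "aF (Cm p p'' *v p' - Cm p p' *v p'') = aF (- (Dm (-4 *\<^sub>R ImHv p' p'') *v p))"
      by (simp add: CS brk_ga' aF_diff brk_aa pr algebra_simps)
    then show ?thesis using lsc[of "-4" "ImHv p' p''"] by (simp add: aF_inj mv_neg mv_scaleR)
  qed
  have st: "sm p p' *v q = -4 *\<^sub>R ImHv (Dm q *v p) p'" for p p' q
  proof -
    have "vf_bracket (prime1 H (X2 (aF p)) (qF q)) (aF p') = vf_bracket (X2 (aF p) (aF p')) (qF q)"
      using tc[of p] unfolding tanaka1_cond_def by (auto simp: g_m1_eq g_m2_eq)
    then have "qF (-4 *\<^sub>R ImHv (- (Dm q *v p)) p') = qF (- (sm p p' *v q))"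
      by (simp add: pr brk_aa CS brk_gq)
    then have "-4 *\<^sub>R ImHv (- (Dm q *v p)) p' = - (sm p p' *v q)" by (simp add: qF_inj)
    then show ?thesis by (simp add: ImHv_def H_negL Imv_def vec_eq_iff)
  qed
  have "tdata X2 Cm sm Dm tm"
    unfolding tdata_def using z1 z2 CS DT ladd lsc dd ss st by blast
  then show ?thesis by blast
qed

end

context herm begin

lemma ImHv_Hzz: "ImHv p p' = (1/2) *\<^sub>R (Rev (H (p + \<i> *s p') (p + \<i> *s p')) - Rev (H p p) - Rev (H p' p'))"
proof -
  have "Re (H (p + \<i> *s p') (p + \<i> *s p') $ j) = Re (H p p $ j) + Re (H p' p' $ j) + 2 * Im (H p p' $ j)" for j
    using H_swap[of p p' j] by (simp add: Hs)
  then show ?thesis by (simp add: vec_eq_iff ImHv_def)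
qed

lemma lin_vanish2:
  fixes L :: "real^'k \<Rightarrow> 'v::real_vector"
  assumes a: "\<And>a b. L (a + b) = L a + L b" and s: "\<And>c a. L (c *\<^sub>R a) = c *\<^sub>R L a"
    and z: "\<And>z. L (Rev (H z z)) = 0"
  shows "L q = 0"
proof (rule lin_vanish[OF a s])
  fix p p'
  have d: "L (x - y) = L x - L y" for x y using a[of "x - y" y] by simp
  show "L (ImHv p p') = 0" unfolding ImHv_Hzz s d z by simp
qed

lemma rmat_ext: "(\<And>q. (s::real^'k^'k) *v q = s' *v q) \<Longrightarrow> s = s'"
  by (metis matvec_axis vec_eq_iff)
lemma cmat_ext: "(\<And>q. (C::complex^'n^'n) *v q = C' *v q) \<Longrightarrow> C = C'"
  by (metis matvec_axis vec_eq_iff)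

lemma g0c_Rev: "g0c C s \<Longrightarrow> s *v Rev (H z z) = (2::real) *\<^sub>R Rev (H (C *v z) z)"
  unfolding g0c_def by (metis Rev_def)

lemma g0_unique: assumes "g0c C s" "g0c C s'" shows "s = s'"
proof (rule rmat_ext)
  fix q
  have "s *v q - s' *v q = 0"
  proof (rule lin_vanish2[where L="\<lambda>q. s *v q - s' *v q"])
    show "s *v Rev (H z z) - s' *v Rev (H z z) = 0" for z using g0c_Rev[OF assms(1)] g0c_Rev[OF assms(2)] by simp
  next
    show "s *v (a + b) - s' *v (a + b) = (s *v a - s' *v a) + (s *v b - s' *v b)" for a b
      by (simp add: matrix_vector_right_distrib)
  next
    show "s *v (c *\<^sub>R a) - s' *v (c *\<^sub>R a) = c *\<^sub>R (s *v a - s' *v a)" for c a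
      by (simp add: vec_eq_iff matrix_vector_mult_def sum_distrib_left mult_ac right_diff_distrib)
  qed
  then show "s *v q = s' *v q" by simp
qed

lemma tri_zero:
  fixes D :: "complex^'n \<Rightarrow> complex^'n \<Rightarrow> complex^'n \<Rightarrow> complex^'n"
  assumes s12: "\<And>a b c. D a b c = D b a c" and s23: "\<And>a b c. D a b c = D a c b"
    and sc: "\<And>a b c x. D a b (x *s c) = x *s D a b c"
    and sk: "\<And>a b c d. H (D a b c) d + H c (D a b d) = 0"
  shows "D a b c = 0"
proof -
  have i: "D (\<i> *s a) b c = \<i> *s D a b c" for a b c
  proof -
    have "D (\<i> *s a) b c = D b (\<i> *s a) c" by (rule s12)
    also have "\<dots> = D b c (\<i> *s a)" by (rule s23)
    also have "\<dots> = \<i> *s D b c a" by (rule sc)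
    also have "D b c a = D a b c" using s12 s23 by metis
    finally show ?thesis .
  qed
  have F: "H (D a b c) d $ j = 0" for d j
  proof -
    have sk1: "H (D x b c) d $ j = - cnj (H (D x b d) c $ j)" for x c d
    proof -
      have "H (D x b c) d $ j + H c (D x b d) $ j = 0" using sk[of x b c d] by (metis vector_add_component zero_index)
      then show ?thesis using H_swap[of "D x b d" c j] by (simp add: eq_neg_iff_add_eq_0)
    qed
    have "\<i> * H (D a b c) d $ j = - cnj (\<i> * H (D a b d) c $ j)"
      using sk1[of "\<i> *s a" c d] by (simp add: i H_scL)
    also have "\<dots> = \<i> * cnj (H (D a b d) c $ j)" by simp
    also have "\<dots> = - \<i> * H (D a b c) d $ j" using sk1[of a c d] by simp
    finally show ?thesis by simp
  qed
  then have "\<forall>d. H (D a b c) d = 0" by (simp add: vec_eq_iff)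
  then show ?thesis using nd unfolding nondegenerate_def by blast
qed

lemma td_z1: "tdata X2 Cm sm Dm tm \<Longrightarrow> A \<notin> g_m1 H \<Longrightarrow> X2 A = 0" by (simp add: tdata_def)
lemma td_z2: "tdata X2 Cm sm Dm tm \<Longrightarrow> A' \<notin> g_m1 H \<Longrightarrow> X2 A A' = 0" by (simp add: tdata_def)
lemma td_CS: "tdata X2 Cm sm Dm tm \<Longrightarrow> X2 (aF p) (aF p') = gF (Cm p p') (sm p p')" by (simp add: tdata_def)
lemma td_g0: "tdata X2 Cm sm Dm tm \<Longrightarrow> g0c (Cm p p') (sm p p')" by (simp add: tdata_def)
lemma td_g0D: "tdata X2 Cm sm Dm tm \<Longrightarrow> g0c (Dm q) (tm q)" by (simp add: tdata_def)
lemma td_Dadd: "tdata X2 Cm sm Dm tm \<Longrightarrow> Dm (a+b) = Dm a + Dm b" by (simp add: tdata_def)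
lemma td_tadd: "tdata X2 Cm sm Dm tm \<Longrightarrow> tm (a+b) = tm a + tm b" by (simp add: tdata_def)
lemma td_Dsc: "tdata X2 Cm sm Dm tm \<Longrightarrow> Dm (c *\<^sub>R a) = c *\<^sub>R Dm a" by (simp add: tdata_def)
lemma td_tsc: "tdata X2 Cm sm Dm tm \<Longrightarrow> tm (c *\<^sub>R a) = c *\<^sub>R tm a" by (simp add: tdata_def)
lemma td_d1: "tdata X2 Cm sm Dm tm \<Longrightarrow> Cm p p' - Cm p' p = -4 *\<^sub>R Dm (ImHv p p')" by (simp add: tdata_def)
lemma td_d2: "tdata X2 Cm sm Dm tm \<Longrightarrow> sm p p' - sm p' p = -4 *\<^sub>R tm (ImHv p p')" by (simp add: tdata_def)
lemma td_b: "tdata X2 Cm sm Dm tm \<Longrightarrow> Cm p p'' *v p' - Cm p p' *v p'' = 4 *\<^sub>R (Dm (ImHv p' p'') *v p)"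
  by (simp add: tdata_def)
lemma td_c: "tdata X2 Cm sm Dm tm \<Longrightarrow> sm p p' *v q = -4 *\<^sub>R ImHv (Dm q *v p) p'" by (simp add: tdata_def)

lemma tdata_unique:
  assumes X: "tdata X2 Cm sm Dm tm" and Y: "tdata Y2 Cm' sm' Dm tm'"
  shows "X2 = Y2"
proof -
  have ss: "sm p p' = sm' p p'" for p p'
    by (rule rmat_ext) (simp add: td_c[OF X] td_c[OF Y])
  define D where "D p p' z = Cm p p' *v z - Cm' p p' *v z" for p p' z
  have s12: "D a b c = D b a c" for a b c
  proof -
    have "Cm a b - Cm b a = Cm' a b - Cm' b a" using td_d1[OF X] td_d1[OF Y] by simp
    then have "(Cm a b - Cm b a) *v c = (Cm' a b - Cm' b a) *v c" by simp
    then show ?thesis unfolding D_def mv_diff by (simp add: algebra_simps)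
  qed
  have s23: "D a b c = D a c b" for a b c
  proof -
    have "Cm a c *v b - Cm a b *v c = Cm' a c *v b - Cm' a b *v c" using td_b[OF X] td_b[OF Y] by simp
    then show ?thesis unfolding D_def by (simp add: algebra_simps)
  qed
  have sc: "D a b (x *s c) = x *s D a b c" for a b c x
    unfolding D_def by (simp add: vector_scalar_commute vector_ssub_ldistrib)
  have sk: "H (D a b c) d + H c (D a b d) = 0" for a b c d
  proof -
    have g1: "g0c (Cm a b) (sm a b)" and g2: "g0c (Cm' a b) (sm a b)" using td_g0[OF X] td_g0[OF Y] ss by simp_all
    show ?thesis using g0c_pol[OF g1, of c d] g0c_pol[OF g2, of c d]
      unfolding D_def by (simp add: H_diffL H_diffR algebra_simps)
  qed
  have "D a b c = 0" for a b c by (rule tri_zero[OF s12 s23 sc sk])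
  then have CC: "Cm p p' = Cm' p p'" for p p' by (intro cmat_ext) (simp add: D_def)
  have val: "X2 (aF p) (aF p') = Y2 (aF p) (aF p')" for p p'
    using td_CS[OF X] td_CS[OF Y] CC ss by simp
  show ?thesis
  proof (rule ext, rule ext)
    fix A A'
    show "X2 A A' = Y2 A A'"
    proof (cases "A \<in> g_m1 H \<and> A' \<in> g_m1 H")
      case True then show ?thesis using val by (auto simp: g_m1_eq)
    next
      case False then show ?thesis using td_z1[OF X] td_z1[OF Y] td_z2[OF X] td_z2[OF Y] by (metis zero_fun_def)
    qed
  qed
qed


lemma crux:
  assumes X: "tdata X2 Cm sm Dm tm"
  shows "Im (H (Dm (Rev (H x x)) *v x) x $ j) = 0"
proof -
  define h where "h = Rev (H x x)"
  define y where "y = \<i> *s x"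
  define T0 where "T0 = Cm x x *v x"
  define Dx where "Dx = Dm h *v x"
  have e0: "ImHv x y = - h"
    by (simp add: vec_eq_iff ImHv_def y_def h_def H_scR)
  have Dn: "Dm (- h) = - Dm h" using td_Dsc[OF X, of "-1" h] by simp
  have my: "M *v y = \<i> *s (M *v x)" for M :: "complex^'n^'n" unfolding y_def by (rule vector_scalar_commute)
  have A: "Cm x y *v x = \<i> *s T0 - 4 *\<^sub>R Dx"
  proof -
    have "Cm x y *v x - Cm x x *v y = 4 *\<^sub>R (Dm (ImHv x y) *v x)" by (rule td_b[OF X])
    then show ?thesis unfolding T0_def Dx_def
      by (simp add: e0 Dn my mv_neg algebra_simps)
  qed
  have B: "Cm y x *v x = \<i> *s T0 - 8 *\<^sub>R Dx"
  proof -
    have "Cm x y - Cm y x = -4 *\<^sub>R Dm (ImHv x y)" by (rule td_d1[OF X])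
    then have "Cm x y *v x - Cm y x *v x = -4 *\<^sub>R (Dm (ImHv x y) *v x)"
      by (metis mv_diff mv_scaleR)
    then show ?thesis unfolding Dx_def
      by (simp add: e0 Dn A mv_neg algebra_simps Dx_def)
  qed
  have C: "Cm y y *v x = - T0 - (12 * \<i>) *s Dx"
  proof -
    have "Cm y y *v x - Cm y x *v y = 4 *\<^sub>R (Dm (ImHv x y) *v y)" by (rule td_b[OF X])
    then show ?thesis
      by (simp add: e0 Dn my B mv_neg vec_eq_iff scaleR_conv_of_real algebra_simps Dx_def)
         (simp add: eq_neg_iff_add_eq_0 add_ac)
  qed
  have g1: "sm x x *v h = 2 *\<^sub>R Rev (H T0 x)" unfolding h_def T0_def by (rule g0c_Rev[OF td_g0[OF X]])
  have c1: "sm x x *v h = -4 *\<^sub>R ImHv Dx x" unfolding Dx_def by (rule td_c[OF X])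
  have hy: "h = Rev (H y y)" by (simp add: h_def y_def H_scL H_scR vec_eq_iff)
  have g2: "sm y y *v h = 2 *\<^sub>R Rev (H (Cm y y *v x) x)"
    unfolding h_def by (rule g0c_Rev[OF td_g0[OF X]])
  have c2: "sm y y *v h = -4 *\<^sub>R ImHv (Dm h *v y) y" by (rule td_c[OF X])
  have c2': "ImHv (Dm h *v y) y = ImHv Dx x"
    by (simp add: y_def Dx_def vector_scalar_commute ImHv_def H_scL H_scR vec_eq_iff)
  have "Re (H T0 x $ j) * 2 = -4 * Im (H Dx x $ j)"
    using arg_cong[OF trans[OF g1[symmetric] c1], of "\<lambda>v. v $ j"] by (simp add: ImHv_def)
  moreover have "2 * (- Re (H T0 x $ j) + 12 * Im (H Dx x $ j)) = -4 * Im (H Dx x $ j)"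
    using arg_cong[OF trans[OF g2[symmetric] c2], of "\<lambda>v. v $ j"] unfolding C c2'
    by (simp add: ImHv_def H_diffL H_negL H_scL)
  ultimately have "Im (H Dx x $ j) = 0" by argo
  then show ?thesis by (simp add: Dx_def h_def)
qed

end

lemma cvec_decomp: "u = rvec (Rev u) + \<i> *s rvec (Imv u)"
  by (simp add: vec_eq_iff complex_eq_iff)
lemma Rev_add[simp]: "Rev (a + b) = Rev a + Rev b" by (simp add: vec_eq_iff)
lemma Imv_add[simp]: "Imv (a + b) = Imv a + Imv b" by (simp add: vec_eq_iff)
lemma Rev_sc: "Rev (c *s w) = Re c *\<^sub>R Rev w - Im c *\<^sub>R Imv w" by (simp add: vec_eq_iff)
lemma Imv_sc: "Imv (c *s w) = Im c *\<^sub>R Rev w + Re c *\<^sub>R Imv w" by (simp add: vec_eq_iff algebra_simps)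
lemma Rev_rvec[simp]: "Rev (rvec q) = q" by (simp add: vec_eq_iff)
lemma Imv_rvec[simp]: "Imv (rvec q) = 0" by (simp add: vec_eq_iff)
lemma Imv_rmat: "Imv (rmat s v) = s *v Imv v"
  by (simp add: vec_eq_iff rmat_comp matrix_vector_mult_def Im_sum)
lemma Rev_rmat: "Rev (rmat s v) = s *v Rev v"
  by (simp add: vec_eq_iff rmat_comp matrix_vector_mult_def Re_sum)
lemma mvr_scaleR: "(c *\<^sub>R M) *v (x::real^'n) = c *\<^sub>R (M *v x)"
  by (simp add: vec_eq_iff matrix_vector_mult_def sum_distrib_left mult_ac)
lemma mvr_right_scaleR: "M *v (c *\<^sub>R (x::real^'n)) = c *\<^sub>R (M *v x)"
  by (simp add: vec_eq_iff matrix_vector_mult_def sum_distrib_left mult_ac)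

lemma cscal: "- ((complex_of_real a * P - complex_of_real b * Q) + \<i> * (complex_of_real b * P + complex_of_real a * Q))
   = Complex a b * (- (P + \<i> * Q))"
  by (simp add: complex_eq_iff algebra_simps)

lemma cvec_scal: "(Re c *\<^sub>R P - Im c *\<^sub>R Q) + \<i> *s (Im c *\<^sub>R P + Re c *\<^sub>R Q) = c *s (P + \<i> *s (Q::complex^'n))"
  by (simp add: vec_eq_iff scaleR_cvec complex_eq_iff algebra_simps)

definition Bc :: "(real^'k \<Rightarrow> complex^'n^'n) \<Rightarrow> complex^'n \<Rightarrow> complex^'k \<Rightarrow> complex^'n" where
  "Bc Dm z w = - (Dm (Rev w) *v z + \<i> *s (Dm (Imv w) *v z))"
definition rc :: "(real^'k \<Rightarrow> real^'k^'k) \<Rightarrow> complex^'k \<Rightarrow> complex^'k \<Rightarrow> complex^'k" where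
  "rc tm u v = (- 1/2) *s (rmat (tm (Rev v)) u + \<i> *s rmat (tm (Imv v)) u)"

lemma Bc_cbilin:
  assumes Da: "\<And>a b. Dm (a+b) = Dm a + Dm b" and Ds: "\<And>c a. Dm (c *\<^sub>R a) = c *\<^sub>R Dm a"
  shows "cbilin (Bc Dm)"
proof -
  have Dd: "Dm (a - b) = Dm a - Dm b" for a b using Da[of "a - b" b] by simp
  have l1: "clin (\<lambda>z. Bc Dm z w)" for w
    unfolding clin_def Bc_def
    by (simp add: matrix_vector_right_distrib vector_scalar_commute vec_eq_iff algebra_simps)
  have l2: "clin (Bc Dm z)" for z
    unfolding clin_def
  proof (intro conjI allI)
    fix x y show "Bc Dm z (x + y) = Bc Dm z x + Bc Dm z y"
      by (simp add: Bc_def Da mv_add vec_eq_iff algebra_simps)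
  next
    fix c x
    have "Bc Dm z (c *s x) = - ((Re c *\<^sub>R (Dm (Rev x) *v z) - Im c *\<^sub>R (Dm (Imv x) *v z))
        + \<i> *s (Im c *\<^sub>R (Dm (Rev x) *v z) + Re c *\<^sub>R (Dm (Imv x) *v z)))"
      by (simp add: Bc_def Rev_sc Imv_sc Dd Da Ds mv_diff mv_add mv_scaleR)
    also have "\<dots> = c *s Bc Dm z x"
      unfolding Bc_def using cscal[of "Re c" _ "Im c"]
      by (simp add: vec_eq_iff scaleR_cvec) (simp add: complex_eq_iff algebra_simps)
    finally show "Bc Dm z (c *s x) = c *s Bc Dm z x" .
  qed
  show ?thesis unfolding cbilin_def using l1 l2 by blast
qed


lemma rmat_diffm: "rmat (s - s') a = rmat s a - rmat s' a"
  by (simp add: vec_eq_iff rmat_comp left_diff_distrib sum_subtractf)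

lemma rmat_dec: "rmat s u = rvec (s *v Rev u) + \<i> *s rvec (s *v Imv u)"
proof -
  have "rmat s u = rmat s (rvec (Rev u) + \<i> *s rvec (Imv u))" by (rule arg_cong[OF cvec_decomp])
  then show ?thesis by (simp add: rmat_add rmat_scale rmat_rvec)
qed

lemma rc_cbilin:
  assumes ta: "\<And>a b. tm (a+b) = tm a + tm b" and ts: "\<And>c a. tm (c *\<^sub>R a) = c *\<^sub>R tm a"
  shows "cbilin (rc tm)"
proof -
  have td: "tm (a - b) = tm a - tm b" for a b using ta[of "a - b" b] by simp
  have l1: "clin (\<lambda>u. rc tm u v)" for v
    unfolding clin_def rc_def
    by (simp add: rmat_add rmat_scale vec_eq_iff algebra_simps)
  have l2: "clin (rc tm u)" for u
    unfolding clin_def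
  proof (intro conjI allI)
    fix x y show "rc tm u (x + y) = rc tm u x + rc tm u y"
      by (simp add: rc_def ta rmat_addm vec_eq_iff algebra_simps)
  next
    fix c x
    have "rc tm u (c *s x) = (- 1/2) *s ((Re c *\<^sub>R rmat (tm (Rev x)) u - Im c *\<^sub>R rmat (tm (Imv x)) u)
        + \<i> *s (Im c *\<^sub>R rmat (tm (Rev x)) u + Re c *\<^sub>R rmat (tm (Imv x)) u))"
      by (simp add: rc_def Rev_sc Imv_sc td ta ts rmat_diffm rmat_addm rmat_scalem scaleR_cvec)
    also have "\<dots> = c *s rc tm u x"
      unfolding rc_def cvec_scal by (simp add: vector_smult_assoc mult.commute)
    finally show "rc tm u (c *s x) = c *s rc tm u x" .
  qed
  show ?thesis unfolding cbilin_def using l1 l2 by blast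
qed

lemma rc_sym:
  assumes tsym: "\<And>a b. tm a *v b = tm b *v a"
  shows "rc tm u v = rc tm v u"
proof -
  have e: "rc tm u v = (- 1/2) *s (rvec (tm (Rev v) *v Rev u) - rvec (tm (Imv v) *v Imv u)
       + \<i> *s (rvec (tm (Rev v) *v Imv u) + rvec (tm (Imv v) *v Rev u)))" for u v
    unfolding rc_def rmat_dec by (simp add: vec_eq_iff algebra_simps)
  show ?thesis unfolding e
    using tsym[of "Rev u" "Rev v"] tsym[of "Imv u" "Imv v"] tsym[of "Rev u" "Imv v"] tsym[of "Imv u" "Rev v"]
    by (simp add: vec_eq_iff algebra_simps)
qed

context herm begin

lemma ImHv_swap: "ImHv a b = - ImHv b a"
  by (simp add: ImHv_def vec_eq_iff H_swap[of a b])

lemma td_tsym: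
  assumes X: "tdata X2 Cm sm Dm tm"
  shows "tm a *v b = tm b *v a"
proof -
  have key: "tm (ImHv p p') *v q = tm q *v ImHv p p'" for p p' q
  proof -
    have "(sm p p' - sm p' p) *v q = (-4 *\<^sub>R tm (ImHv p p')) *v q" by (simp add: td_d2[OF X])
    then have "sm p p' *v q - sm p' p *v q = -4 *\<^sub>R (tm (ImHv p p') *v q)"
      by (simp add: matrix_vector_mult_diff_rdistrib mvr_scaleR mv_neg)
    moreover have "sm p p' *v q - sm p' p *v q = -4 *\<^sub>R (ImHv (Dm q *v p) p' + ImHv p (Dm q *v p'))"
      by (simp add: td_c[OF X] ImHv_swap[of "Dm q *v p'" p] algebra_simps)
    moreover have "ImHv (Dm q *v p) p' + ImHv p (Dm q *v p') = tm q *v ImHv p p'"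
      using arg_cong[OF g0c_pol[OF td_g0D[OF X], of q p p'], of Imv]
      by (simp add: ImHv_def Imv_rmat)
    ultimately show ?thesis by simp
  qed
  have "tm a *v b - tm b *v a = 0"
  proof (rule lin_vanish[where L="\<lambda>a. tm a *v b - tm b *v a"])
    show "tm (x + y) *v b - tm b *v (x + y) = (tm x *v b - tm b *v x) + (tm y *v b - tm b *v y)" for x y
      by (simp add: td_tadd[OF X] matrix_vector_mult_add_rdistrib matrix_vector_right_distrib)
    show "tm (c *\<^sub>R x) *v b - tm b *v (c *\<^sub>R x) = c *\<^sub>R (tm x *v b - tm b *v x)" for c x
      by (simp add: td_tsc[OF X] mvr_scaleR mvr_right_scaleR algebra_simps)
    show "tm (ImHv p p') *v b - tm b *v ImHv p p' = 0" for p p' by (simp add: key)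
  qed
  then show ?thesis by simp
qed

lemma partB_g2:
  assumes X: "tdata X2 Cm sm Dm tm"
  shows "(\<lambda>(z,w). (Bc Dm z w, rc tm w w)) \<in> g_2 H"
proof -
  have D0: "Dm 0 = 0" using td_Dsc[OF X, of 0 0] by simp
  have t0: "tm 0 = 0" using td_tsc[OF X, of 0 0] by simp
  have iz: "Imv (H z z) = 0" for z by (simp add: vec_eq_iff Hzz_real)
  have cb: "cbilin (Bc Dm)" by (rule Bc_cbilin) (simp_all add: td_Dadd[OF X] td_Dsc[OF X])
  have cr: "cbilin (rc tm)" by (rule rc_cbilin) (simp_all add: td_tadd[OF X] td_tsc[OF X])
  have sy: "\<forall>u v. rc tm u v = rc tm v u" using rc_sym td_tsym[OF X] by blast
  have re: "(\<chi> j. complex_of_real (Re (H (Bc Dm z (rvec u)) z $ j))) = rc tm (H z z) (rvec u)" for z u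
  proof -
    have g: "tm u *v Rev (H z z) = 2 *\<^sub>R Rev (H (Dm u *v z) z)" by (rule g0c_Rev[OF td_g0D[OF X]])
    have "rc tm (H z z) (rvec u) = (- 1/2) *s rvec (tm u *v Rev (H z z))"
      by (simp add: rc_def t0 rmat_dec iz)
    then show ?thesis by (simp add: g Bc_def D0 H_negL vec_eq_iff)
  qed
  have im: "Im (H (Bc Dm z (H z z)) z $ j) = 0" for z j
  proof -
    have "Imv (H z z) = 0" by (simp add: vec_eq_iff Hzz_real)
    then have "Bc Dm z (H z z) = - (Dm (Rev (H z z)) *v z)" by (simp add: Bc_def D0)
    then show ?thesis using crux[OF X, of z j] by (simp add: H_negL)
  qed
  show ?thesis unfolding g_2_def using cb cr sy re im by blast
qed

end

lemma polar4:
  fixes K :: "'a::ab_group_add \<Rightarrow> 'a \<Rightarrow> 'a \<Rightarrow> 'a \<Rightarrow> complex"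
  assumes a1: "\<And>a a' b c d. K (a + a') b c d = K a b c d + K a' b c d"
    and a2: "\<And>a b b' c d. K a (b + b') c d = K a b c d + K a b' c d"
    and a3: "\<And>a b c c' d. K a b (c + c') d = K a b c d + K a b c' d"
    and a4: "\<And>a b c d d'. K a b c (d + d') = K a b c d + K a b c d'"
    and z: "\<And>x. Im (K x x x x) = 0"
  shows "Im (K y w x x + K y x w x + K y x x w + K w y x x + K x y w x + K x y x w
           + K w x y x + K x w y x + K x x y w + K w x x y + K x w x y + K x x w y) = 0"
proof -
  have m1: "K (a - a') b c d = K a b c d - K a' b c d" for a a' b c d
    using a1[of "a - a'" a'] by (simp add: algebra_simps)
  have m2: "K a (b - b') c d = K a b c d - K a b' c d" for a b b' c d
    using a2[of a "b - b'" b'] by (simp add: algebra_simps)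
  have m3: "K a b (c - c') d = K a b c d - K a b c' d" for a b c c' d
    using a3[of a b "c - c'" c'] by (simp add: algebra_simps)
  have m4: "K a b c (d - d') = K a b c d - K a b c d'" for a b c d d'
    using a4[of a b c "d - d'" d'] by (simp add: algebra_simps)
  note ex = a1 a2 a3 a4 m1 m2 m3 m4
  have L: "Im (K y x x x + K x y x x + K x x y x + K x x x y) = 0" for x y
  proof -
    have E: "Im (K y x x x + K x y x x + K x x y x + K x x x y)
           + Im (K x y y y + K y x y y + K y y x y + K y y y x) = 0" for x y
    proof -
      have 1: "Im (K (x + y) (x + y) (x + y) (x + y)) = 0" by (rule z)
      have 2: "Im (K (x - y) (x - y) (x - y) (x - y)) = 0" by (rule z)
      from 1 2 z[of x] z[of y] show ?thesis by (simp only: ex plus_complex.sel minus_complex.sel)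
    qed
    from E[of x y] E[of "x + x" y] show ?thesis by (simp only: ex plus_complex.sel minus_complex.sel)
  qed
  have "Im (K y (x + w) (x + w) (x + w) + K (x + w) y (x + w) (x + w) + K (x + w) (x + w) y (x + w) + K (x + w) (x + w) (x + w) y) = 0"
    by (rule L)
  moreover have "Im (K y (x - w) (x - w) (x - w) + K (x - w) y (x - w) (x - w) + K (x - w) (x - w) y (x - w) + K (x - w) (x - w) (x - w) y) = 0"
    by (rule L)
  ultimately show ?thesis using L[where x=w and y=y] by (simp only: ex plus_complex.sel minus_complex.sel)
qed


lemma Rev_neg[simp]: "Rev (- a) = - Rev a" by (simp add: vec_eq_iff)
lemma Imv_neg[simp]: "Imv (- a) = - Imv a" by (simp add: vec_eq_iff)

definition F2 :: "(complex^'n \<Rightarrow> complex^'k \<Rightarrow> complex^'n) \<Rightarrow> (complex^'k \<Rightarrow> complex^'k \<Rightarrow> complex^'k) \<Rightarrow> ('n::finite,'k::finite) vf" where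
  "F2 B r = (\<lambda>(z,w). (B z w, r w w))"

lemma cb_addL: "cbilin B \<Longrightarrow> B (a + b) w = B a w + B b w" unfolding cbilin_def clin_def by blast
lemma cb_scL: "cbilin B \<Longrightarrow> B (c *s a) w = c *s B a w" unfolding cbilin_def clin_def by blast
lemma cb_addR: "cbilin B \<Longrightarrow> B a (v + w) = B a v + B a w" unfolding cbilin_def clin_def by blast
lemma cb_scR: "cbilin B \<Longrightarrow> B a (c *s w) = c *s B a w" unfolding cbilin_def clin_def by blast
lemma cb_0L: "cbilin B \<Longrightarrow> B 0 w = 0" using cb_addL[of B 0 0 w] by (metis add_cancel_right_right add.right_neutral)
lemma cb_0R: "cbilin B \<Longrightarrow> B a 0 = 0" using cb_addR[of B a 0 0] by (metis add_cancel_right_right add.right_neutral)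
lemma cb_negL: "cbilin B \<Longrightarrow> B (- a) w = - B a w" using cb_addL[of B a "-a" w] cb_0L[of B w] by (simp add: eq_neg_iff_add_eq_0 add.commute)
lemma cb_negR: "cbilin B \<Longrightarrow> B a (- w) = - B a w" using cb_addR[of B a w "-w"] cb_0R[of B a] by (simp add: eq_neg_iff_add_eq_0 add.commute)
lemma cb_diffL: "cbilin B \<Longrightarrow> B (a - b) w = B a w - B b w" using cb_addL[of B a "-b" w] cb_negL[of B b w] by simp
lemma cb_diffR: "cbilin B \<Longrightarrow> B a (v - w) = B a v - B a w" using cb_addR[of B a v "-w"] cb_negR[of B a w] by simp
lemma cb_sRL: "cbilin B \<Longrightarrow> B (t *\<^sub>R a) w = t *\<^sub>R B a w" by (simp add: scaleR_cvec cb_scL)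
lemma cb_sRR: "cbilin B \<Longrightarrow> B a (t *\<^sub>R w) = t *\<^sub>R B a w" by (simp add: scaleR_cvec cb_scR)

lemmas cbs = cb_addL cb_scL cb_addR cb_scR cb_0L cb_0R cb_negL cb_negR cb_diffL cb_diffR

context herm begin

definition g2c where
  "g2c B r \<longleftrightarrow> cbilin B \<and> cbilin r \<and> (\<forall>u v. r u v = r v u) \<and>
     (\<forall>z u. (\<chi> j. complex_of_real (Re (H (B z (rvec u)) z $ j))) = r (H z z) (rvec u)) \<and>
     (\<forall>z j. Im (H (B z (H z z)) z $ j) = 0)"

lemma g_2_eq: "g_2 H = {F2 B r | B r. g2c B r}"
  unfolding g_2_def F2_def g2c_def by blast

end

locale g2loc = herm H for H :: "complex^'n::finite \<Rightarrow> complex^'n \<Rightarrow> complex^'k::finite" +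
  fixes B :: "complex^'n \<Rightarrow> complex^'k \<Rightarrow> complex^'n" and r :: "complex^'k \<Rightarrow> complex^'k \<Rightarrow> complex^'k"
  assumes g2: "g2c B r"
begin

lemma cbB: "cbilin B" using g2 by (simp add: g2c_def)
lemma cbr: "cbilin r" using g2 by (simp add: g2c_def)
lemma rsym: "r u v = r v u" using g2 by (simp add: g2c_def)
lemma reC: "(\<chi> j. complex_of_real (Re (H (B z (rvec u)) z $ j))) = r (H z z) (rvec u)" using g2 by (simp add: g2c_def)
lemma imC: "Im (H (B z (H z z)) z $ j) = 0" using g2 by (simp add: g2c_def)

lemmas Bs = cbs[OF cbB] and rs = cbs[OF cbr]

lemma rreal: "Imv (r (rvec a) (rvec u)) = 0"
proof (rule lin_vanish2[where L="\<lambda>a. Imv (r (rvec a) (rvec u))"])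
  show "Imv (r (rvec (a + b)) (rvec u)) = Imv (r (rvec a) (rvec u)) + Imv (r (rvec b) (rvec u))" for a b
    by (simp add: rs)
  show "Imv (r (rvec (c *\<^sub>R a)) (rvec u)) = c *\<^sub>R Imv (r (rvec a) (rvec u))" for c a
    by (simp add: rs vec_eq_iff)
  show "Imv (r (rvec (Rev (H z z))) (rvec u)) = 0" for z
    unfolding Hzz_rvec[symmetric] reC[symmetric] by (simp add: vec_eq_iff)
qed

lemma rIm: "Imv (r a (rvec u)) = Rev (r (rvec (Imv a)) (rvec u))"
proof -
  have "r a (rvec u) = r (rvec (Rev a)) (rvec u) + \<i> *s r (rvec (Imv a)) (rvec u)"
    by (subst cvec_decomp[of a]) (simp add: rs)
  then show ?thesis using rreal[of "Rev a" u] rreal[of "Imv a" u] by (simp add: vec_eq_iff)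
qed

lemma rRe: "Rev (r a (rvec u)) = Rev (r (rvec (Rev a)) (rvec u))"
proof -
  have "r a (rvec u) = r (rvec (Rev a)) (rvec u) + \<i> *s r (rvec (Imv a)) (rvec u)"
    by (subst cvec_decomp[of a]) (simp add: rs)
  then show ?thesis using rreal[of "Rev a" u] rreal[of "Imv a" u] by (simp add: vec_eq_iff)
qed

lemma Rpol: "H (B a (rvec u)) b + H a (B b (rvec u)) = 2 *s r (H a b) (rvec u)"
proof -
  have "(H (B a (rvec u)) b + H a (B b (rvec u)) - 2 *s r (H a b) (rvec u)) $ j = 0" for j
  proof (rule sesq_polar[where S="\<lambda>a b. (H (B a (rvec u)) b + H a (B b (rvec u)) - 2 *s r (H a b) (rvec u)) $ j"])
    fix a
    have e: "complex_of_real (Re (H (B a (rvec u)) a $ j)) = r (H a a) (rvec u) $ j"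
      using arg_cong[OF reC[of a u], of "\<lambda>v. v $ j"] by simp
    show "(H (B a (rvec u)) a + H a (B a (rvec u)) - 2 *s r (H a a) (rvec u)) $ j = 0"
      using e[symmetric] H_swap[of "B a (rvec u)" a j] by (simp add: complex_eq_iff)
  qed (simp_all add: Hs Bs rs algebra_simps)
  then show ?thesis by (simp add: vec_eq_iff)
qed

lemma Rpol2: "H (B a (H c d)) b + H a (B b (H d c)) = 2 *s r (H a b) (H c d)"
proof -
  define R where "R = Rev (H c d)"
  define I where "I = Imv (H c d)"
  have cd: "H c d = rvec R + \<i> *s rvec I" unfolding R_def I_def by (rule cvec_decomp)
  have dc: "H d c = rvec R - \<i> *s rvec I"
    unfolding R_def I_def by (simp add: vec_eq_iff H_swap[of c d] complex_eq_iff)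
  have e1: "H (B a (rvec R + \<i> *s rvec I)) b + H a (B b (rvec R - \<i> *s rvec I))
     = (H (B a (rvec R)) b + H a (B b (rvec R))) + \<i> *s (H (B a (rvec I)) b + H a (B b (rvec I)))"
    by (simp add: Bs Hs vec_eq_iff algebra_simps)
  have e2: "2 *s r (H a b) (rvec R + \<i> *s rvec I) = 2 *s r (H a b) (rvec R) + \<i> *s (2 *s r (H a b) (rvec I))"
    by (simp add: rs vec_eq_iff algebra_simps)
  show ?thesis unfolding cd dc e1 e2 Rpol ..
qed


definition K4 :: "'k \<Rightarrow> complex^'n \<Rightarrow> complex^'n \<Rightarrow> complex^'n \<Rightarrow> complex^'n \<Rightarrow> complex" where
  "K4 j a b c d = H (B a (H b c)) d $ j"

lemma SymIm: "Im (K4 j a c d b) - Im (K4 j b d c a) = 2 * Im (r (H a b) (H c d) $ j)"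
proof -
  have "H (B a (H c d)) b $ j + H a (B b (H d c)) $ j = 2 * r (H a b) (H c d) $ j"
    using arg_cong[OF Rpol2[of a c d b], of "\<lambda>v. v $ j"] by simp
  then have "K4 j a c d b + cnj (K4 j b d c a) = 2 * r (H a b) (H c d) $ j"
    unfolding K4_def using H_swap[of "B b (H d c)" a j] by simp
  then have "Im (K4 j a c d b + cnj (K4 j b d c a)) = Im (2 * r (H a b) (H c d) $ j)" by simp
  then show ?thesis by simp
qed

lemma K4_rules:
  "K4 j (x + y) b c d = K4 j x b c d + K4 j y b c d"
  "K4 j a (x + y) c d = K4 j a x c d + K4 j a y c d"
  "K4 j a b (x + y) d = K4 j a b x d + K4 j a b y d"
  "K4 j a b c (x + y) = K4 j a b c x + K4 j a b c y"
  "K4 j (t *s a) b c d = t * K4 j a b c d"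
  "K4 j a (t *s b) c d = t * K4 j a b c d"
  "K4 j a b (t *s c) d = cnj t * K4 j a b c d"
  "K4 j a b c (t *s d) = cnj t * K4 j a b c d"
  unfolding K4_def by (simp_all add: Bs Hs)

lemma Nzero: "Im (K4 j p z p' z + K4 j p' z p z + K4 j z p' p z + K4 j p z z p') = 0"
proof -
  have P: "Im (K4 j y w x x + K4 j y x w x + K4 j y x x w + K4 j w y x x + K4 j x y w x + K4 j x y x w
           + K4 j w x y x + K4 j x w y x + K4 j x x y w + K4 j w x x y + K4 j x w x y + K4 j x x w y) = 0" for x y w
    by (rule polar4) (simp_all add: K4_rules, simp add: K4_def imC)
  note P1 = P[where y=p' and w=p and x=z] and P2 = P[where y="\<i> *s p'" and w="\<i> *s p" and x=z]
  have R12: "Im (r (H p p') (H z z) $ j) + Im (r (H z z) (H p' p) $ j) = 0"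
  proof -
    have "Imv (r (H p' p) (rvec (Rev (H z z)))) = - Imv (r (H p p') (rvec (Rev (H z z))))"
      unfolding rIm by (simp add: ImHv_swap[of p' p, unfolded ImHv_def] rs)
    then show ?thesis using rsym[of "H z z" "H p' p"] Hzz_rvec[of z]
      by (simp add: vec_eq_iff)
  qed
  have R34: "Im (r (H p z) (H z p') $ j) = Im (r (H z p') (H p z) $ j)" using rsym by simp
  note S1 = SymIm[where j=j and a=p and c=z and d=z and b=p']
   and S2 = SymIm[where j=j and a=z and c=p' and d=p and b=z]
   and S3 = SymIm[where j=j and a=p and c=z and d=p' and b=z]
   and S4 = SymIm[where j=j and a=z and c=p and d=z and b=p']
  from P1 P2 have X: "Im (K4 j p' z p z) + Im (K4 j p' z z p) + Im (K4 j z p' p z) + Im (K4 j z p' z p)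
     + Im (K4 j p z p' z) + Im (K4 j z p p' z) + Im (K4 j p z z p') + Im (K4 j z p z p') = 0"
    by (simp add: K4_rules)
  from X S1 S2 S3 S4 R12 R34 show ?thesis by simp
qed

end

lemma clin_lin: "clin f \<Longrightarrow> Vector_Spaces.linear (*s) (*s) (f :: complex^'a \<Rightarrow> complex^'b)"
  by unfold_locales (auto simp: clin_def vec_eq_iff algebra_simps)

lemma rlin_lin:
  assumes "\<And>a b. f (a + b) = f a + f b" "\<And>c a. f (c *\<^sub>R a) = c *\<^sub>R f a"
  shows "Vector_Spaces.linear (*s) (*s) (f :: real^'a \<Rightarrow> real^'b)"
  by unfold_locales (auto simp: assms scalar_mult_eq_scaleR vec_eq_iff algebra_simps)

lemma clin_mat: "clin f \<Longrightarrow> matrix f *v z = f z"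
  by (rule matrix_works[OF clin_lin])
lemma rlin_mat:
  assumes "\<And>a b. f (a + b) = f a + f b" "\<And>c a. f (c *\<^sub>R a) = c *\<^sub>R f a"
  shows "matrix f *v (z::real^'a) = (f z :: real^'b)"
  by (rule matrix_works[OF rlin_lin[OF assms]])


lemma vscale_0[simp]: "vscale c 0 = 0" by (simp add: vscale_def fun_eq_iff zero_fun_def)

context herm begin

definition Tb where "Tb B p p' z = (2 * \<i>) *s (B p (H z p') + B p' (H z p) + B z (H p' p))"
definition CmB where "CmB B p p' = matrix (Tb B p p')"
definition smB where "smB B p p' = matrix (\<lambda>q. 4 *\<^sub>R ImHv (B p (rvec q)) p')"
definition pa :: "('n,'k) vf \<Rightarrow> complex^'n" where "pa A = fst (A (0,0))"
definition pqf :: "('n,'k) vf \<Rightarrow> real^'k" where "pqf Q = Rev (snd (Q (0,0)))"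
definition Phi' where
  "Phi' B = (\<lambda>A A'. if A \<in> g_m1 H \<and> A' \<in> g_m1 H then gF (CmB B (pa A) (pa A')) (smB B (pa A) (pa A')) else 0)"

lemma pa_aF[simp]: "pa (aF p) = p" by (simp add: pa_def aF_00)
lemma pqf_qF[simp]: "pqf (qF q) = q" by (simp add: pqf_def qF_def)
lemma aF_in[simp]: "aF p \<in> g_m1 H" by (simp add: g_m1_eq)
lemma qF_in[simp]: "qF q \<in> g_m2 H" by (simp add: g_m2_eq)

lemma Phi'_val: "Phi' B (aF p) (aF p') = gF (CmB B p p') (smB B p p')" by (simp add: Phi'_def)

lemma ImHv_addL: "ImHv (a + b) c = ImHv a c + ImHv b c" by (simp add: ImHv_def H_addL vec_eq_iff)
lemma ImHv_addR: "ImHv a (b + c) = ImHv a b + ImHv a c" by (simp add: ImHv_def H_addR vec_eq_iff)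
lemma ImHv_sRL: "ImHv (t *\<^sub>R a) c = t *\<^sub>R ImHv a c" by (simp add: ImHv_def H_scRL vec_eq_iff)
lemma ImHv_sRR: "ImHv a (t *\<^sub>R c) = t *\<^sub>R ImHv a c" by (simp add: ImHv_def H_scRR vec_eq_iff)
lemma ImHv_negL: "ImHv (- a) c = - ImHv a c" by (simp add: ImHv_def H_negL vec_eq_iff)

lemma Hdiff_Im: "H a b - H b a = (2 * \<i>) *s rvec (ImHv a b)"
  by (simp add: vec_eq_iff ImHv_def H_swap[of b a] complex_eq_iff)

end

context g2loc begin

lemma Tb_clin: "clin (Tb B p p')"
  unfolding clin_def Tb_def by (simp add: Bs Hs vec_eq_iff algebra_simps)
lemma CmB_mv: "CmB B p p' *v z = Tb B p p' z"
  unfolding CmB_def by (rule clin_mat[OF Tb_clin])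
lemma smB_mv: "smB B p p' *v q = 4 *\<^sub>R ImHv (B p (rvec q)) p'"
  unfolding smB_def by (rule rlin_mat) (simp_all add: Bs ImHv_addL ImHv_sRL scaleR_cvec[symmetric] cb_sRR[OF cbB] algebra_simps)

definition DmB where "DmB q = matrix (\<lambda>z. - B z (rvec q))"
definition tmB where "tmB q = matrix (\<lambda>a. -2 *\<^sub>R Rev (r (rvec a) (rvec q)))"

lemma DmB_mv: "DmB q *v z = - B z (rvec q)"
  unfolding DmB_def by (rule clin_mat) (simp add: clin_def Bs vec_eq_iff)
lemma tmB_mv: "tmB q *v a = -2 *\<^sub>R Rev (r (rvec a) (rvec q))"
  unfolding tmB_def by (rule rlin_mat) (simp_all add: rs scaleR_cvec[symmetric] cb_sRL[OF cbr] vec_eq_iff algebra_simps)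
lemma tmB_rmat: "rmat (tmB q) w = -2 *s r w (rvec q)"
proof -
  have "r w (rvec q) = r (rvec (Rev w)) (rvec q) + \<i> *s r (rvec (Imv w)) (rvec q)"
    by (subst cvec_decomp[of w]) (simp add: rs)
  moreover have "r (rvec a) (rvec q) = rvec (Rev (r (rvec a) (rvec q)))" for a
    using rreal[of a q] by (simp add: vec_eq_iff complex_eq_iff)
  ultimately show ?thesis by (simp add: rmat_dec tmB_mv vec_eq_iff algebra_simps)
qed

lemma Tb_diff12: "Tb B p p' z - Tb B p' p z = 4 *\<^sub>R B z (rvec (ImHv p p'))"
proof -
  have "Tb B p p' z - Tb B p' p z = (2 * \<i>) *s B z (H p' p - H p p')"
    by (simp add: Tb_def Bs vec_eq_iff algebra_simps)
  also have "H p' p - H p p' = - ((2 * \<i>) *s rvec (ImHv p p'))" by (simp add: Hdiff_Im[symmetric])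
  finally show ?thesis by (simp add: Bs scaleR_cvec vec_eq_iff)
qed

lemma Tb_diff23: "Tb B p p'' p' - Tb B p p' p'' = B p (rvec (-4 *\<^sub>R ImHv p' p''))"
proof -
  have "Tb B p p'' p' - Tb B p p' p'' = (2 * \<i>) *s B p (H p' p'' - H p'' p')"
    by (simp add: Tb_def Bs vec_eq_iff algebra_simps)
  also have "H p' p'' - H p'' p' = (2 * \<i>) *s rvec (ImHv p' p'')" by (rule Hdiff_Im)
  finally show ?thesis by (simp add: Bs scaleR_cvec vec_eq_iff)
qed

lemma g0c_CmB: "g0c (CmB B p p') (smB B p p')"
  unfolding g0c_def
proof
  fix z
  have "2 * Re (H (Tb B p p' z) z $ j) = 4 * Im (H (B p (H z z)) p' $ j)" for j
  proof -
    have "H (Tb B p p' z) z $ j = (2 * \<i>) * (K4 j p z p' z + K4 j p' z p z + K4 j z p' p z)"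
      by (simp add: Tb_def K4_def Hs distrib_left)
    then show ?thesis using Nzero[of j p z p'] by (simp add: K4_def)
  qed
  then show "2 *\<^sub>R (\<chi> j. Re (H (CmB B p p' *v z) z $ j)) = smB B p p' *v (\<chi> j. Re (H z z $ j))"
    unfolding CmB_mv Rev_def[symmetric] smB_mv Hzz_rvec[symmetric] by (simp add: vec_eq_iff ImHv_def)
qed


lemma Tb_add2: "Tb B p (a + b) z = Tb B p a z + Tb B p b z"
  by (simp add: Tb_def Bs Hs vec_eq_iff algebra_simps)
lemma Tb_add1: "Tb B (a + b) p z = Tb B a p z + Tb B b p z"
  by (simp add: Tb_def Bs Hs vec_eq_iff algebra_simps)
lemma Tb_sc2: "Tb B p (c *\<^sub>R a) z = c *\<^sub>R Tb B p a z"
  by (simp add: Tb_def Bs Hs scaleR_cvec vec_eq_iff algebra_simps)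
lemma Tb_sc1: "Tb B (c *\<^sub>R a) p z = c *\<^sub>R Tb B a p z"
  by (simp add: Tb_def Bs Hs scaleR_cvec vec_eq_iff algebra_simps)

lemma CmB_add2: "CmB B p (a + b) = CmB B p a + CmB B p b"
  by (rule cmat_ext) (simp add: mv_add CmB_mv Tb_add2)
lemma CmB_add1: "CmB B (a + b) p = CmB B a p + CmB B b p"
  by (rule cmat_ext) (simp add: mv_add CmB_mv Tb_add1)
lemma CmB_sc2: "CmB B p (c *\<^sub>R a) = c *\<^sub>R CmB B p a"
  by (rule cmat_ext) (simp add: mv_scaleR CmB_mv Tb_sc2)
lemma CmB_sc1: "CmB B (c *\<^sub>R a) p = c *\<^sub>R CmB B a p"
  by (rule cmat_ext) (simp add: mv_scaleR CmB_mv Tb_sc1)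
lemma smB_add2: "smB B p (a + b) = smB B p a + smB B p b"
  by (rule rmat_ext) (simp add: matrix_vector_mult_add_rdistrib smB_mv ImHv_addR algebra_simps)
lemma smB_add1: "smB B (a + b) p = smB B a p + smB B b p"
  by (rule rmat_ext) (simp add: matrix_vector_mult_add_rdistrib smB_mv ImHv_addL Bs algebra_simps)
lemma smB_sc2: "smB B p (c *\<^sub>R a) = c *\<^sub>R smB B p a"
  by (rule rmat_ext) (simp add: mvr_scaleR smB_mv ImHv_sRR)
lemma smB_sc1: "smB B (c *\<^sub>R a) p = c *\<^sub>R smB B a p"
  by (rule rmat_ext) (simp add: mvr_scaleR smB_mv ImHv_sRL cb_sRL[OF cbB])

definition X1p where "X1p p = (\<lambda>Q. aF (B p (rvec (pqf Q))))"

lemma X1p_qF: "X1p p (qF q) = aF (B p (rvec q))" by (simp add: X1p_def)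

lemma tc_p: "tanaka1_cond H (Phi' B (aF p)) (X1p p)"
  unfolding tanaka1_cond_def
proof (intro conjI ballI)
  fix Q assume "Q \<in> g_m2 H" then show "X1p p Q \<in> g_m1 H" by (simp add: X1p_def)
next
  show "lin_on (g_m2 H) vscale vscale (X1p p)"
    unfolding lin_on_def g_m2_eq
    by (auto simp: X1p_qF qF_add qF_scale aF_add aF_scale Bs scaleR_cvec)
next
  fix A A' assume "A \<in> g_m1 H" "A' \<in> g_m1 H"
  then obtain p' p'' where A: "A = aF p'" "A' = aF p''" by (auto simp: g_m1_eq)
  show "vf_bracket (Phi' B (aF p) A) A' - vf_bracket (Phi' B (aF p) A') A = X1p p (vf_bracket A A')"
  proof -
    have e: "- (CmB B p p' *v p'') - - (CmB B p p'' *v p') = B p (rvec (-4 *\<^sub>R ImHv p' p''))"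
      unfolding Tb_diff23[symmetric] CmB_mv by simp
    show ?thesis unfolding A Phi'_val brk_ga'[OF g0c_CmB] aF_diff brk_aa X1p_qF e ..
  qed
next
  fix Q A assume "Q \<in> g_m2 H" "A \<in> g_m1 H"
  then obtain q p' where A: "Q = qF q" "A = aF p'" by (auto simp: g_m1_eq g_m2_eq)
  show "vf_bracket (X1p p Q) A = vf_bracket (Phi' B (aF p) A) Q"
    unfolding A Phi'_val X1p_qF brk_aa brk_gq smB_mv by simp
qed

lemma tg1_p: "Phi' B (aF p) \<in> tg1 H"
  unfolding tg1_def
proof (intro CollectI conjI allI impI ballI)
  fix A assume "A \<notin> g_m1 H" then show "Phi' B (aF p) A = 0" by (simp add: Phi'_def)
next
  fix A assume "A \<in> g_m1 H"
  then obtain p' where "A = aF p'" by (auto simp: g_m1_eq)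
  then show "Phi' B (aF p) A \<in> g_0 H" by (auto simp: Phi'_val g_0_eq intro: g0c_CmB)
next
  show "lin_on (g_m1 H) vscale vscale (Phi' B (aF p))"
    unfolding lin_on_def g_m1_eq
    by (auto simp: Phi'_val aF_add aF_scale gF_add gF_scale CmB_add2 smB_add2 CmB_sc2 smB_sc2)
next
  show "\<exists>X1'. tanaka1_cond H (Phi' B (aF p)) X1'" using tc_p by blast
qed


lemma DmB_add: "DmB (a + b) = DmB a + DmB b"
  by (rule cmat_ext) (simp add: mv_add DmB_mv Bs)
lemma DmB_sc: "DmB (c *\<^sub>R a) = c *\<^sub>R DmB a"
  by (rule cmat_ext) (simp add: mv_scaleR DmB_mv Bs scaleR_cvec)
lemma tmB_add: "tmB (a + b) = tmB a + tmB b"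
  by (rule rmat_ext) (simp add: matrix_vector_mult_add_rdistrib tmB_mv rs algebra_simps)
lemma tmB_sc: "tmB (c *\<^sub>R a) = c *\<^sub>R tmB a"
  by (rule rmat_ext) (simp add: mvr_scaleR tmB_mv rs vec_eq_iff)

lemma g0c_DmB: "g0c (DmB q) (tmB q)"
  unfolding g0c_def
proof
  fix z
  have "Rev (r (H z z) (rvec q)) = Rev (H (B z (rvec q)) z)"
    unfolding reC[symmetric] by (simp add: vec_eq_iff)
  then show "2 *\<^sub>R (\<chi> j. Re (H (DmB q *v z) z $ j)) = tmB q *v (\<chi> j. Re (H z z $ j))"
    unfolding DmB_mv Rev_def[symmetric] tmB_mv Hzz_rvec[symmetric] by (simp add: H_negL)
qed

lemma CmB_diff: "CmB B p p' - CmB B p' p = DmB (-4 *\<^sub>R ImHv p p')"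
  by (rule cmat_ext) (simp add: mv_diff CmB_mv Tb_diff12 DmB_mv Bs scaleR_cvec)

lemma smB_diff: "smB B p p' - smB B p' p = tmB (-4 *\<^sub>R ImHv p p')"
proof (rule rmat_ext)
  fix q
  have "Imv (H (B p (rvec q)) p' + H p (B p' (rvec q))) = Imv (2 *s r (H p p') (rvec q))"
    by (simp only: Rpol)
  then have "ImHv (B p (rvec q)) p' - ImHv (B p' (rvec q)) p = 2 *\<^sub>R Rev (r (rvec (ImHv p p')) (rvec q))"
    using ImHv_swap[of p "B p' (rvec q)"] rIm[of "H p p'" q]
    by (simp add: ImHv_def vec_eq_iff)
  then show "(smB B p p' - smB B p' p) *v q = tmB (-4 *\<^sub>R ImHv p p') *v q"
    by (simp add: matrix_vector_mult_diff_rdistrib smB_mv tmB_mv rs rsym[of "rvec q"] scaleR_cvec vec_eq_iff algebra_simps)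
qed

end

context herm begin

lemma prime_unique:
  assumes P: "tanaka1_cond H X1 P" and P': "tanaka1_cond H X1 P'"
  shows "P (qF q) = P' (qF q)"
proof
  fix x
  have lP: "lin_on (g_m2 H) vscale vscale P" and lP': "lin_on (g_m2 H) vscale vscale P'"
    using P P' unfolding tanaka1_cond_def by blast+
  have br: "P (qF (-4 *\<^sub>R ImHv p p')) = P' (qF (-4 *\<^sub>R ImHv p p'))" for p p'
  proof -
    have "vf_bracket (X1 (aF p)) (aF p') - vf_bracket (X1 (aF p')) (aF p) = P (vf_bracket (aF p) (aF p'))"
      using P unfolding tanaka1_cond_def by simp
    moreover have "vf_bracket (X1 (aF p)) (aF p') - vf_bracket (X1 (aF p')) (aF p) = P' (vf_bracket (aF p) (aF p'))"
      using P' unfolding tanaka1_cond_def by simp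
    ultimately show ?thesis by (simp add: brk_aa)
  qed
  define L where "L a = P (qF a) x - P' (qF a) x" for a
  have La: "L (a + b) = L a + L b" for a b
  proof -
    have "P (qF (a + b)) = P (qF a) + P (qF b)" "P' (qF (a + b)) = P' (qF a) + P' (qF b)"
      using lP lP' unfolding lin_on_def by (simp_all add: qF_add[symmetric])
    then show ?thesis by (simp add: L_def)
  qed
  have Ls: "L (c *\<^sub>R a) = c *\<^sub>R L a" for c a
  proof -
    have "P (qF (c *\<^sub>R a)) = vscale c (P (qF a))" "P' (qF (c *\<^sub>R a)) = vscale c (P' (qF a))"
      using lP lP' unfolding lin_on_def by (simp_all add: qF_scale[symmetric])
    then show ?thesis by (simp add: L_def vscale_def algebra_simps)
  qed
  have "L q = 0"
  proof (rule lin_vanish[OF La Ls])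
    fix p p'
    have "L (-4 *\<^sub>R ImHv p p') = 0" using br[of p p'] by (simp add: L_def)
    then show "L (ImHv p p') = 0" using Ls[of "-4" "ImHv p p'"] by simp
  qed
  then show "P (qF q) x = P' (qF q) x" by (simp add: L_def)
qed

end

context g2loc begin

lemma prime_p: "prime1 H (Phi' B (aF p)) (qF q) = aF (B p (rvec q))"
proof -
  have "tanaka1_cond H (Phi' B (aF p)) (prime1 H (Phi' B (aF p)))"
    using someI[where P="\<lambda>X. tanaka1_cond H (Phi' B (aF p)) X", OF tc_p] unfolding prime1_def .
  then show ?thesis using prime_unique tc_p X1p_qF by metis
qed

lemma partA: "Phi' B \<in> tg2 H"
  unfolding tg2_def
proof (intro CollectI conjI allI impI ballI)
  fix A assume "A \<notin> g_m1 H" then show "Phi' B A = 0" by (simp add: Phi'_def fun_eq_iff zero_fun_def)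
next
  fix A assume "A \<in> g_m1 H"
  then show "Phi' B A \<in> tg1 H" using tg1_p by (auto simp: g_m1_eq)
next
  show "lin_on (g_m1 H) vscale vscale2 (Phi' B)"
    unfolding lin_on_def g_m1_eq
  proof (intro conjI allI ballI)
    fix x y assume "x \<in> range aF" "y \<in> range aF"
    then obtain p1 p2 where x: "x = aF p1" and y: "y = aF p2" by auto
    show "Phi' B (x + y) = Phi' B x + Phi' B y" unfolding x y aF_add
    proof (rule ext)
      fix A' show "Phi' B (aF (p1 + p2)) A' = (Phi' B (aF p1) + Phi' B (aF p2)) A'"
        by (cases "A' \<in> g_m1 H") (simp_all add: Phi'_def CmB_add1 smB_add1 gF_add)
    qed
  next
    fix c x assume "x \<in> range aF"
    then obtain p1 where x: "x = aF p1" by auto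
    show "Phi' B (vscale c x) = vscale2 c (Phi' B x)" unfolding x aF_scale vscale2_def
    proof (rule ext)
      fix A' show "Phi' B (aF (c *\<^sub>R p1)) A' = vscale c (Phi' B (aF p1) A')"
        by (cases "A' \<in> g_m1 H") (simp_all add: Phi'_def CmB_sc1 smB_sc1 gF_scale)
    qed
  qed
next
  let ?X2' = "\<lambda>Q. gF (DmB (pqf Q)) (tmB (pqf Q))"
  have "(\<forall>Q\<in>g_m2 H. ?X2' Q \<in> g_0 H) \<and> lin_on (g_m2 H) vscale vscale ?X2' \<and>
     (\<forall>A\<in>g_m1 H. \<forall>B'\<in>g_m1 H. Phi' B A B' - Phi' B B' A = ?X2' (vf_bracket A B')) \<and>
     (\<forall>Q\<in>g_m2 H. \<forall>A\<in>g_m1 H. vf_bracket (?X2' Q) A = prime1 H (Phi' B A) Q)"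
  proof (intro conjI ballI)
    fix Q assume "Q \<in> g_m2 H" then show "?X2' Q \<in> g_0 H" by (auto simp: g_0_eq intro: g0c_DmB)
  next
    show "lin_on (g_m2 H) vscale vscale ?X2'"
      unfolding lin_on_def g_m2_eq by (auto simp: qF_add qF_scale gF_add gF_scale DmB_add DmB_sc tmB_add tmB_sc)
  next
    fix A A' assume "A \<in> g_m1 H" "A' \<in> g_m1 H"
    then obtain p p' where "A = aF p" "A' = aF p'" by (auto simp: g_m1_eq)
    then show "Phi' B A A' - Phi' B A' A = ?X2' (vf_bracket A A')"
      by (simp add: Phi'_val gF_diff brk_aa CmB_diff smB_diff)
  next
    fix Q A assume "Q \<in> g_m2 H" "A \<in> g_m1 H"
    then obtain q p where "Q = qF q" "A = aF p" by (auto simp: g_m1_eq g_m2_eq)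
    then show "vf_bracket (?X2' Q) A = prime1 H (Phi' B A) Q"
      by (simp add: brk_ga'[OF g0c_DmB] DmB_mv prime_p)
  qed
  then show "\<exists>X2'. (\<forall>Q\<in>g_m2 H. X2' Q \<in> g_0 H) \<and> lin_on (g_m2 H) vscale vscale X2' \<and>
     (\<forall>A\<in>g_m1 H. \<forall>B'\<in>g_m1 H. Phi' B A B' - Phi' B B' A = X2' (vf_bracket A B')) \<and>
     (\<forall>Q\<in>g_m2 H. \<forall>A\<in>g_m1 H. vf_bracket (X2' Q) A = prime1 H (Phi' B A) Q)"
    by - (rule exI[where x="?X2'"], assumption)
qed

end

context vector_space_pair begin
lemma dim_image_eq_gen:
  assumes lf: "Vector_Spaces.linear s1 s2 f" and fi: "inj_on f (vs1.span S)"
  shows "vs2.dim (f ` S) = vs1.dim S"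
proof -
  interpret lf: Vector_Spaces.linear s1 s2 f by fact
  obtain B where B: "B \<subseteq> S" "vs1.independent B" "S \<subseteq> vs1.span B" "card B = vs1.dim S"
    using vs1.basis_exists[of S] by auto
  then have "vs1.span S = vs1.span B"
    using vs1.span_mono[of B S] vs1.span_mono[of S "vs1.span B"] vs1.span_span[of B] by auto
  moreover have "card (f ` B) = card B"
    using assms card_image[of f B] inj_on_subset[of f "vs1.span S" B] B vs1.span_superset by auto
  moreover have "(f ` B) \<subseteq> (f ` S)"
    using B by auto
  ultimately show ?thesis
    by (metis B(2) B(4) fi lf.dependent_inj_imageD lf.span_image vs2.dim_eq_card_independent vs2.dim_span)
qed
end

lemma vs1: "vector_space (vscale :: real \<Rightarrow> ('n::finite,'k::finite) vf \<Rightarrow> _)"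
  by unfold_locales (auto simp: vscale_def fun_eq_iff scaleR_add_right scaleR_add_left)
lemma vs3: "vector_space (vscale3 :: real \<Rightarrow> _ \<Rightarrow> (('n::finite,'k::finite) vf \<Rightarrow> _))"
  by unfold_locales (auto simp: vscale3_def vscale2_def vscale_def fun_eq_iff scaleR_add_right scaleR_add_left)


context herm begin

definition Bx :: "('n,'k) vf \<Rightarrow> complex^'n \<Rightarrow> complex^'k \<Rightarrow> complex^'n" where
  "Bx X = (\<lambda>z w. fst (X (z,w)))"
definition Phi where "Phi X = Phi' (Bx X)"

lemma Bx_F2: "Bx (F2 B r) = B" by (simp add: Bx_def F2_def)

lemma Phi'_add: "Phi' (\<lambda>z w. B1 z w + B2 z w) = Phi' B1 + Phi' B2"
proof -
  have C: "CmB (\<lambda>z w. B1 z w + B2 z w) p p' = CmB B1 p p' + CmB B2 p p'" for p p'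
    by (simp add: CmB_def matrix_def Tb_def vec_eq_iff algebra_simps)
  have S: "smB (\<lambda>z w. B1 z w + B2 z w) p p' = smB B1 p p' + smB B2 p p'" for p p'
    by (simp add: smB_def matrix_def ImHv_addL vec_eq_iff algebra_simps)
  show ?thesis by (rule ext, rule ext) (simp add: Phi'_def C S gF_add)
qed

lemma Phi'_sc: "Phi' (\<lambda>z w. c *\<^sub>R B z w) = vscale3 c (Phi' B)"
proof -
  have C: "CmB (\<lambda>z w. c *\<^sub>R B z w) p p' = c *\<^sub>R CmB B p p'" for p p'
    by (simp add: CmB_def matrix_def Tb_def vec_eq_iff algebra_simps scaleR_cvec)
  have S: "smB (\<lambda>z w. c *\<^sub>R B z w) p p' = c *\<^sub>R smB B p p'" for p p'
    by (simp add: smB_def matrix_def ImHv_sRL vec_eq_iff algebra_simps)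
  show ?thesis by (rule ext, rule ext) (simp add: Phi'_def C S gF_scale vscale3_def vscale2_def)
qed

lemma Phi_add: "Phi (X + Y) = Phi X + Phi Y"
proof -
  have "Bx (X + Y) = (\<lambda>z w. Bx X z w + Bx Y z w)" by (simp add: Bx_def)
  then show ?thesis by (simp add: Phi_def Phi'_add)
qed

lemma Phi_sc: "Phi (vscale c X) = vscale3 c (Phi X)"
proof -
  have "Bx (vscale c X) = (\<lambda>z w. c *\<^sub>R Bx X z w)" by (simp add: Bx_def vscale_def)
  then show ?thesis by (simp add: Phi_def Phi'_sc)
qed

lemma partB_g2c:
  assumes X: "tdata X2 Cm sm Dm tm"
  shows "g2c (Bc Dm) (rc tm)"
proof -
  have D0: "Dm 0 = 0" using td_Dsc[OF X, of 0 0] by simp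
  have t0: "tm 0 = 0" using td_tsc[OF X, of 0 0] by simp
  have iz: "Imv (H z z) = 0" for z by (simp add: vec_eq_iff Hzz_real)
  have cb: "cbilin (Bc Dm)" by (rule Bc_cbilin) (simp_all add: td_Dadd[OF X] td_Dsc[OF X])
  have cr: "cbilin (rc tm)" by (rule rc_cbilin) (simp_all add: td_tadd[OF X] td_tsc[OF X])
  have sy: "\<forall>u v. rc tm u v = rc tm v u" using rc_sym td_tsym[OF X] by blast
  have re: "(\<chi> j. complex_of_real (Re (H (Bc Dm z (rvec u)) z $ j))) = rc tm (H z z) (rvec u)" for z u
  proof -
    have g: "tm u *v Rev (H z z) = 2 *\<^sub>R Rev (H (Dm u *v z) z)" by (rule g0c_Rev[OF td_g0D[OF X]])
    have "rc tm (H z z) (rvec u) = (- 1/2) *s rvec (tm u *v Rev (H z z))"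
      by (simp add: rc_def t0 rmat_dec iz)
    then show ?thesis by (simp add: g Bc_def D0 H_negL vec_eq_iff)
  qed
  have im: "Im (H (Bc Dm z (H z z)) z $ j) = 0" for z j
  proof -
    have "Bc Dm z (H z z) = - (Dm (Rev (H z z)) *v z)" by (simp add: Bc_def D0 iz)
    then show ?thesis using crux[OF X, of z j] by (simp add: H_negL)
  qed
  show ?thesis unfolding g2c_def using cb cr sy re im by blast
qed

lemma g2loc_I: "g2c B r \<Longrightarrow> g2loc H B r"
  by (intro g2loc.intro herm_axioms) (simp add: g2loc_axioms_def)

lemma surjB:
  assumes X2: "X2 \<in> tg2 H"
  shows "\<exists>B r. g2c B r \<and> Phi' B = X2"
proof -
  obtain Cm sm Dm tm where X: "tdata X2 Cm sm Dm tm" using tg2_tdata[OF X2] by blast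
  define B where "B = Bc Dm"
  define r where "r = rc tm"
  have g: "g2c B r" unfolding B_def r_def by (rule partB_g2c[OF X])
  interpret G: g2loc H B r by (rule g2loc_I[OF g])
  obtain Cm' sm' Dm' tm' where Y: "tdata (Phi' B) Cm' sm' Dm' tm'" using tg2_tdata[OF G.partA] by blast
  have CC: "Cm' p p' = CmB B p p'" for p p'
    using td_CS[OF Y, of p p'] by (simp add: Phi'_val gF_inj)
  have D0: "Dm 0 = 0" using td_Dsc[OF X, of 0 0] by simp
  have DD: "G.DmB q = Dm q" for q
    by (rule cmat_ext) (simp only: G.DmB_mv, simp add: B_def Bc_def D0)
  have DI: "Dm' (ImHv p p') = Dm (ImHv p p')" for p p'
  proof -
    have "-4 *\<^sub>R Dm' (ImHv p p') = Dm (-4 *\<^sub>R ImHv p p')"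
      using td_d1[OF Y, of p p'] G.CmB_diff[of p p'] by (simp add: CC DD)
    then show ?thesis using td_Dsc[OF X, of "-4" "ImHv p p'"] by simp
  qed
  have "Dm' q - Dm q = 0" for q
  proof (rule lin_vanish[where L="\<lambda>q. Dm' q - Dm q"])
    show "Dm' (a + b) - Dm (a + b) = (Dm' a - Dm a) + (Dm' b - Dm b)" for a b
      by (simp add: td_Dadd[OF X] td_Dadd[OF Y])
    show "Dm' (c *\<^sub>R a) - Dm (c *\<^sub>R a) = c *\<^sub>R (Dm' a - Dm a)" for c a
      by (simp add: td_Dsc[OF X] td_Dsc[OF Y] algebra_simps)
  qed (simp add: DI)
  then have "Dm' = Dm" by auto
  with Y have "tdata (Phi' B) Cm' sm' Dm tm'" by simp
  then have "Phi' B = X2" by (rule tdata_unique[OF _ X])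
  with g show ?thesis by blast
qed


lemma B_det:
  assumes g1: "g2c B1 r1" and g2: "g2c B2 r2" and e: "Phi' B1 = Phi' B2"
  shows "B1 = B2"
proof -
  interpret G1: g2loc H B1 r1 by (rule g2loc_I[OF g1])
  interpret G2: g2loc H B2 r2 by (rule g2loc_I[OF g2])
  have CC: "CmB B1 p p' = CmB B2 p p'" for p p'
    using fun_cong[OF fun_cong[OF e, of "aF p"], of "aF p'"] by (simp add: Phi'_val gF_inj)
  have TT: "Tb B1 p p' z = Tb B2 p p' z" for p p' z
    using G1.CmB_mv[of p p' z] G2.CmB_mv[of p p' z] CC by simp
  have R: "B1 z (rvec q) = B2 z (rvec q)" for z q
  proof -
    have "B1 z (rvec q) - B2 z (rvec q) = 0"
    proof (rule lin_vanish[where L="\<lambda>q. B1 z (rvec q) - B2 z (rvec q)"])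
      show "B1 z (rvec (a + b)) - B2 z (rvec (a + b)) = (B1 z (rvec a) - B2 z (rvec a)) + (B1 z (rvec b) - B2 z (rvec b))" for a b
        by (simp add: G1.Bs G2.Bs)
      show "B1 z (rvec (c *\<^sub>R a)) - B2 z (rvec (c *\<^sub>R a)) = c *\<^sub>R (B1 z (rvec a) - B2 z (rvec a))" for c a
        by (simp add: G1.Bs G2.Bs scaleR_cvec vector_ssub_ldistrib)
      show "B1 z (rvec (ImHv p p')) - B2 z (rvec (ImHv p p')) = 0" for p p'
        using G1.Tb_diff12[of p p' z] G2.Tb_diff12[of p p' z] TT[of p p' z] TT[of p' p z] by simp
    qed
    then show ?thesis by simp
  qed
  show ?thesis
  proof (rule ext, rule ext)
    fix z w
    have "B1 z w = B1 z (rvec (Rev w) + \<i> *s rvec (Imv w))" by (rule arg_cong[OF cvec_decomp])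
    also have "\<dots> = B2 z (rvec (Rev w) + \<i> *s rvec (Imv w))" by (simp add: G1.Bs G2.Bs R)
    also have "\<dots> = B2 z w" by (rule arg_cong[OF cvec_decomp[symmetric]])
    finally show "B1 z w = B2 z w" .
  qed
qed

lemma r_det:
  assumes g1: "g2c B r1" and g2: "g2c B r2"
  shows "r1 = r2"
proof -
  interpret G1: g2loc H B r1 by (rule g2loc_I[OF g1])
  interpret G2: g2loc H B r2 by (rule g2loc_I[OF g2])
  have R: "r1 (rvec a) (rvec u) = r2 (rvec a) (rvec u)" for a u
  proof -
    have "r1 (rvec a) (rvec u) - r2 (rvec a) (rvec u) = 0"
    proof (rule lin_vanish2[where L="\<lambda>a. r1 (rvec a) (rvec u) - r2 (rvec a) (rvec u)"])
      show "r1 (rvec (a + b)) (rvec u) - r2 (rvec (a + b)) (rvec u) = (r1 (rvec a) (rvec u) - r2 (rvec a) (rvec u)) + (r1 (rvec b) (rvec u) - r2 (rvec b) (rvec u))" for a b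
        by (simp add: G1.rs G2.rs)
      show "r1 (rvec (c *\<^sub>R a)) (rvec u) - r2 (rvec (c *\<^sub>R a)) (rvec u) = c *\<^sub>R (r1 (rvec a) (rvec u) - r2 (rvec a) (rvec u))" for c a
        by (simp add: G1.rs G2.rs scaleR_cvec vector_ssub_ldistrib)
      show "r1 (rvec (Rev (H z z))) (rvec u) - r2 (rvec (Rev (H z z))) (rvec u) = 0" for z
        using G1.reC[of z u] G2.reC[of z u] by (simp add: Hzz_rvec[symmetric])
    qed
    then show ?thesis by simp
  qed
  show ?thesis
  proof (rule ext, rule ext)
    fix v w
    have "r1 v w = r1 (rvec (Rev v) + \<i> *s rvec (Imv v)) (rvec (Rev w) + \<i> *s rvec (Imv w))"
      using cvec_decomp[of v] cvec_decomp[of w] by simp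
    also have "\<dots> = r2 (rvec (Rev v) + \<i> *s rvec (Imv v)) (rvec (Rev w) + \<i> *s rvec (Imv w))"
      by (simp add: G1.rs G2.rs R)
    also have "\<dots> = r2 v w" using cvec_decomp[of v] cvec_decomp[of w] by simp
    finally show "r1 v w = r2 v w" .
  qed
qed


lemma g2c_0: "g2c (\<lambda>z w. 0) (\<lambda>u v. 0)"
  unfolding g2c_def cbilin_def clin_def by (simp add: vec_eq_iff)

lemma g2c_add: "g2c B1 r1 \<Longrightarrow> g2c B2 r2 \<Longrightarrow> g2c (\<lambda>z w. B1 z w + B2 z w) (\<lambda>u v. r1 u v + r2 u v)"
  unfolding g2c_def cbilin_def clin_def
  by (simp add: vector_add_ldistrib algebra_simps H_addL vec_eq_iff)

lemma g2c_sc: "g2c B r \<Longrightarrow> g2c (\<lambda>z w. c *\<^sub>R B z w) (\<lambda>u v. c *\<^sub>R r u v)"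
  unfolding g2c_def cbilin_def clin_def
  by (simp add: scaleR_cvec H_scL vec_eq_iff algebra_simps)


lemma F2_0: "F2 (\<lambda>z w. 0) (\<lambda>u v. 0) = 0" by (simp add: F2_def fun_eq_iff zero_prod_def)
lemma F2_add: "F2 B1 r1 + F2 B2 r2 = F2 (\<lambda>z w. B1 z w + B2 z w) (\<lambda>u v. r1 u v + r2 u v)"
  by (simp add: F2_def fun_eq_iff)
lemma F2_sc: "vscale c (F2 B r) = F2 (\<lambda>z w. c *\<^sub>R B z w) (\<lambda>u v. c *\<^sub>R r u v)"
  by (simp add: F2_def fun_eq_iff vscale_def)

lemma g2_sub: "module.subspace vscale (g_2 H)"
proof -
  interpret V: vector_space "vscale :: real \<Rightarrow> ('n,'k) vf \<Rightarrow> _" by (rule vs1)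
  show ?thesis unfolding V.subspace_def g_2_eq
  proof (intro conjI ballI allI)
    show "0 \<in> {F2 B r |B r. g2c B r}" using F2_0 g2c_0 by (metis (mono_tags, lifting) mem_Collect_eq)
  next
    fix x y assume "x \<in> {F2 B r |B r. g2c B r}" "y \<in> {F2 B r |B r. g2c B r}"
    then show "x + y \<in> {F2 B r |B r. g2c B r}" using F2_add g2c_add by fastforce
  next
    fix c x assume "x \<in> {F2 B r |B r. g2c B r}"
    then show "vscale c x \<in> {F2 B r |B r. g2c B r}" using F2_sc g2c_sc by fastforce
  qed
qed

lemma Phi_lin: "Vector_Spaces.linear vscale vscale3 Phi"
  unfolding Vector_Spaces.linear_def module_hom_def module_hom_axioms_def
  by (simp add: vs1 vs3 module_iff_vector_space Phi_add Phi_sc)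

lemma Phi_img: "Phi ` g_2 H = tg2 H"
proof
  show "Phi ` g_2 H \<subseteq> tg2 H"
  proof
    fix Y assume "Y \<in> Phi ` g_2 H"
    then obtain B r where "Y = Phi (F2 B r)" "g2c B r" by (auto simp: g_2_eq)
    then show "Y \<in> tg2 H" using g2loc.partA[OF g2loc_I] by (simp add: Phi_def Bx_F2)
  qed
next
  show "tg2 H \<subseteq> Phi ` g_2 H"
  proof
    fix X2 assume "X2 \<in> tg2 H"
    then obtain B r where "g2c B r" "Phi' B = X2" using surjB by blast
    then have "Phi (F2 B r) = X2" "F2 B r \<in> g_2 H" by (auto simp: Phi_def Bx_F2 g_2_eq)
    then show "X2 \<in> Phi ` g_2 H" by (metis image_eqI)
  qed
qed

lemma Phi_inj: "inj_on Phi (g_2 H)"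
proof
  fix X Y assume "X \<in> g_2 H" "Y \<in> g_2 H" and e: "Phi X = Phi Y"
  then obtain B1 r1 B2 r2 where X: "X = F2 B1 r1" "g2c B1 r1" and Y: "Y = F2 B2 r2" "g2c B2 r2"
    by (auto simp: g_2_eq)
  have "B1 = B2" using B_det[OF X(2) Y(2)] e by (simp add: X Y Phi_def Bx_F2)
  moreover have "r1 = r2" using r_det X(2) Y(2) \<open>B1 = B2\<close> by blast
  ultimately show "X = Y" by (simp add: X Y)
qed

end

theorem lemma1p2:
  fixes H :: "complex^'n::finite \<Rightarrow> complex^'n \<Rightarrow> complex^'k::finite"
  assumes "hermitian_form H" and "nondegenerate H"
  shows "vector_space.dim vscale (g_2 H) = vector_space.dim vscale3 (tg2 H)"
proof -
  interpret herm H using assms by (rule herm.intro)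
  interpret VP: vector_space_pair "vscale :: real \<Rightarrow> ('n,'k) vf \<Rightarrow> _" "vscale3 :: real \<Rightarrow> _ \<Rightarrow> (('n,'k) vf \<Rightarrow> _)"
    by (simp add: vector_space_pair_def vs1 vs3)
  have sp: "VP.vs1.span (g_2 H) = g_2 H" using g2_sub by simp
  have "VP.vs2.dim (Phi ` g_2 H) = VP.vs1.dim (g_2 H)"
    by (rule VP.dim_image_eq_gen[OF Phi_lin]) (simp add: sp Phi_inj)
  then show ?thesis by (simp add: Phi_img)
qed

end
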